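(* Let $\mathcal{X}\subset\mathbb{R}^d$ be compact with diameter $\ell$. Let $k:\mathbb{R}^d\to\mathbb{R}$ be a continuous positive-definite function with $k(0)=1$ such that the Hessian $\nabla^2 k(0)$ exists, and write $k(x,y):=k(x-y)$. Let $P$ be the probability measure on $\mathbb{R}^d$ with $k(\Delta)=\int e^{\sqrt{-1}\,\omega^\mathsf{T}\Delta}\,\mathrm{d}P(\omega)$. Let $\mathcal{X}_\Delta:=\{x-y: x,y\in\mathcal{X}\}$ and suppose $k$ is $L$-Lipschitz on $\mathcal{X}_\Delta$. Let $D$ be an even positive integer, let $\omega_1,\dots,\omega_{D/2}$ be i.i.d. with law $P$, define $$\tilde z(x):=\sqrt{\tfrac{2}{D}}\,\big(\sin(\omega_1^\mathsf{T}x),\cos(\omega_1^\mathsf{T}x),\dots,\sin(\omega_{D/2}^\mathsf{T}x),\cos(\omega_{D/2}^\mathsf{T}x)\big)^\mathsf{T},$$ $\tilde f(x,y):=\tilde z(x)^\mathsf{T}\tilde z(y)-k(x-y)$, $\|\tilde f\|_\infty:=\sup_{x,y\in\mathcal{X}}|\tilde f(x,y)|$, and $R:=\mathbb{E}\max_{i=1,\dots,D/2}\|\omega_i\|$. Then $$\mathbb{E}\big[\|\tilde f\|_\infty\big]\le\frac{24\gamma\sqrt d\,\ell}{\sqrt D}(R+L),$$ where $\gamma:=4\sqrt\pi\,\operatorname{erfc}(2\sqrt{\log 2})+\sqrt{\log 2}\approx 0.964$.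
   Context: The existence of $P$ follows from Bochner's theorem; $\|\cdot\|$ is the Euclidean norm and $\operatorname{erfc}$ is the complementary error function. *)

theory Defs
  imports "HOL-Analysis.Analysis" "HOL-Probability.Probability"
begin

definition erfc :: "real \<Rightarrow> real" where
  "erfc x = 2 / sqrt pi * integral {x..} (\<lambda>t. exp (- (t\<^sup>2)))"

definition rff_gamma :: real where
  "rff_gamma = 4 * sqrt pi * erfc (2 * sqrt (ln 2)) + sqrt (ln 2)"

definition pos_def_fun :: "('a::real_vector \<Rightarrow> real) \<Rightarrow> bool" where
  "pos_def_fun k \<longleftrightarrow>
     (\<forall>(n::nat) (x::nat \<Rightarrow> 'a) (c::nat \<Rightarrow> complex).
        (\<Sum>i<n. \<Sum>j<n. c i * cnj (c j) * complex_of_real (k (x i - x j))) \<in> \<real> \<and>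
        0 \<le> Re (\<Sum>i<n. \<Sum>j<n. c i * cnj (c j) * complex_of_real (k (x i - x j))))"

definition hessian_exists_at :: "('a::euclidean_space \<Rightarrow> real) \<Rightarrow> 'a \<Rightarrow> bool" where
  "hessian_exists_at k a \<longleftrightarrow>
     (\<exists>g :: 'a \<Rightarrow> 'a. (\<forall>\<^sub>F x in nhds a. (k has_derivative (\<lambda>h. g x \<bullet> h)) (at x))
                       \<and> g differentiable (at a))"

definition rff_feature :: "nat \<Rightarrow> (nat \<Rightarrow> 'a::real_inner) \<Rightarrow> 'a \<Rightarrow> nat \<Rightarrow> real" where
  "rff_feature D \<omega> x j =
     sqrt (2 / real D) * (if even j then sin (\<omega> (j div 2) \<bullet> x) else cos (\<omega> (j div 2) \<bullet> x))"

definition rff_error :: "nat \<Rightarrow> ('a::real_inner \<Rightarrow> real) \<Rightarrow> (nat \<Rightarrow> 'a) \<Rightarrow> 'a \<Rightarrow> 'a \<Rightarrow> real" where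
  "rff_error D k \<omega> x y = (\<Sum>j<D. rff_feature D \<omega> x j * rff_feature D \<omega> y j) - k (x - y)"

end

theory Submission
  imports Defs
begin

definition rs :: "nat set \<Rightarrow> nat \<Rightarrow> real" where
  "rs E i = (if i \<in> E then -1 else 1)"

lemma sum_Pow_prod:
  fixes f :: "nat \<Rightarrow> bool \<Rightarrow> real"
  assumes "finite I"
  shows "(\<Sum>E\<in>Pow I. \<Prod>i\<in>I. f i (i \<in> E)) = (\<Prod>i\<in>I. f i True + f i False)"
  using assms
proof (induction I rule: finite_induct)
  case empty thus ?case by simp
next
  case (insert a I)
  have disj: "Pow I \<inter> insert a ` Pow I = {}" using insert by auto
  have inj: "inj_on (insert a) (Pow I)" using insert by (auto simp: inj_on_def)
  have "(\<Sum>E\<in>Pow (insert a I). \<Prod>i\<in>insert a I. f i (i \<in> E))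
      = (\<Sum>E\<in>Pow I. \<Prod>i\<in>insert a I. f i (i \<in> E)) + (\<Sum>E\<in>insert a ` Pow I. \<Prod>i\<in>insert a I. f i (i \<in> E))"
    unfolding Pow_insert using disj insert by (subst sum.union_disjoint) auto
  also have "(\<Sum>E\<in>Pow I. \<Prod>i\<in>insert a I. f i (i \<in> E)) = (\<Sum>E\<in>Pow I. f a False * (\<Prod>i\<in>I. f i (i \<in> E)))"
  proof (intro sum.cong refl)
    fix E assume "E \<in> Pow I"
    hence "a \<notin> E" using insert(2) by auto
    thus "(\<Prod>i\<in>insert a I. f i (i \<in> E)) = f a False * (\<Prod>i\<in>I. f i (i \<in> E))"
      using insert(1,2) by simp
  qed
  also have "\<dots> = f a False * (\<Sum>E\<in>Pow I. \<Prod>i\<in>I. f i (i \<in> E))"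
    by (simp add: sum_distrib_left)
  also have "(\<Sum>E\<in>insert a ` Pow I. \<Prod>i\<in>insert a I. f i (i \<in> E)) = f a True * (\<Sum>E\<in>Pow I. \<Prod>i\<in>I. f i (i \<in> E))"
    using insert(1,2) inj
    by (subst sum.reindex) (auto simp: sum_distrib_left intro!: sum.cong prod.cong, metis)
  finally show ?case using insert by (simp add: algebra_simps)
qed

lemma cosh_le_exp_sq: "exp (x::real) + exp (-x) \<le> 2 * exp (x\<^sup>2 / 2)"
proof -
  have *: "exp y + exp (-y) \<le> 2 * exp (y\<^sup>2 / 2)" if "y \<ge> 0" for y :: real
  proof -
    have "-(2*y) * (1/2) + ln (1 + (1/2) * (exp (2*y) - 1)) \<le> (2*y)\<^sup>2 / 8"
      by (rule Hoeffdings_lemma_aux) (use that in auto)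
    hence "ln ((1 + exp (2*y)) / 2) \<le> y + y\<^sup>2/2"
      by (simp add: power2_eq_square field_simps)
    hence "exp (ln ((1 + exp (2*y)) / 2)) \<le> exp (y + y\<^sup>2/2)"
      by simp
    hence "(1 + exp (2*y)) / 2 \<le> exp (y + y\<^sup>2/2)"
      by (subst (asm) exp_ln) (auto intro: add_pos_pos)
    hence "(1 + exp (2*y)) / 2 * exp (-y) \<le> exp (y + y\<^sup>2/2) * exp (-y)"
      by (intro mult_right_mono) auto
    moreover have "(1 + exp (2*y)) / 2 * exp (-y) = (exp y + exp (-y)) / 2"
      by (simp add: field_simps flip: exp_add)
    moreover have "exp (y + y\<^sup>2/2) * exp (-y) = exp (y\<^sup>2/2)"
      by (simp flip: exp_add)
    ultimately show ?thesis by simp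
  qed
  show ?thesis
  proof (cases "x \<ge> 0")
    case True thus ?thesis using * by simp
  next
    case False thus ?thesis using *[of "-x"] by (simp add: add.commute)
  qed
qed

lemma rad_mgf:
  assumes "finite I"
  shows "(\<Sum>E\<in>Pow I. exp (\<Sum>i\<in>I. rs E i * x i)) \<le> 2 ^ card I * exp ((\<Sum>i\<in>I. (x i)\<^sup>2) / 2)"
proof -
  have "(\<Sum>E\<in>Pow I. exp (\<Sum>i\<in>I. rs E i * x i)) = (\<Sum>E\<in>Pow I. \<Prod>i\<in>I. (\<lambda>i b. exp (if b then - x i else x i)) i (i \<in> E))"
    using assms by (auto simp: exp_sum rs_def intro!: sum.cong prod.cong)
  also have "\<dots> = (\<Prod>i\<in>I. exp (- x i) + exp (x i))"
    using assms by (subst sum_Pow_prod) auto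
  also have "\<dots> \<le> (\<Prod>i\<in>I. 2 * exp ((x i)\<^sup>2 / 2))"
    using cosh_le_exp_sq by (intro prod_mono) (auto simp: add.commute intro: add_nonneg_nonneg)
  also have "\<dots> = 2 ^ card I * exp ((\<Sum>i\<in>I. (x i)\<^sup>2) / 2)"
    using assms by (simp add: prod.distrib exp_sum sum_divide_distrib)
  finally show ?thesis .
qed

lemma exp_abs_le: "exp (l * \<bar>z\<bar>) \<le> exp (l * z) + exp (- (l * z))" for l z :: real
  by (cases "z \<ge> 0") (auto simp: add_increasing2 add_increasing)

lemma rad_max:
  fixes b :: "'j \<Rightarrow> nat \<Rightarrow> real"
  assumes fin: "finite I" "finite J" "J \<noteq> {}" and sg: "\<sigma> \<ge> 0"
    and b: "\<And>j. j \<in> J \<Longrightarrow> (\<Sum>i\<in>I. (b j i)\<^sup>2) \<le> \<sigma>\<^sup>2"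
  shows "(\<Sum>E\<in>Pow I. Max ((\<lambda>j. \<bar>\<Sum>i\<in>I. rs E i * b j i\<bar>) ` J)) / 2 ^ card I
           \<le> \<sigma> * sqrt (2 * ln (2 * card J))"
proof -
  define n where "n = card J"
  define N :: real where "N = 2 ^ card I"
  define Y where "Y E = Max ((\<lambda>j. \<bar>\<Sum>i\<in>I. rs E i * b j i\<bar>) ` J)" for E
  have n1: "n \<ge> 1" using fin by (simp add: n_def Suc_le_eq card_gt_0_iff)
  have N0: "N > 0" by (simp add: N_def)
  have cardPow: "card (Pow I) = 2 ^ card I" using fin by (simp add: card_Pow)
  have Yin: "\<exists>j\<in>J. Y E = \<bar>\<Sum>i\<in>I. rs E i * b j i\<bar>" for E
  proof -
    have "Y E \<in> (\<lambda>j. \<bar>\<Sum>i\<in>I. rs E i * b j i\<bar>) ` J"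
      unfolding Y_def using fin by (intro Max_in) auto
    thus ?thesis by auto
  qed
  have Y0: "Y E \<ge> 0" for E using Yin[of E] by auto
  show ?thesis
  proof (cases "\<sigma> = 0")
    case True
    have "b j i = 0" if "j \<in> J" "i \<in> I" for j i
    proof -
      have "(\<Sum>i\<in>I. (b j i)\<^sup>2) = 0" using b[OF that(1)] True
        by (metis (no_types, lifting) antisym power_zero_numeral sum_nonneg zero_le_power2)
      thus ?thesis using fin that by (simp add: sum_nonneg_eq_0_iff)
    qed
    hence "Y E = 0" for E using Yin[of E] by auto
    thus ?thesis using True by (simp add: Y_def)
  next
    case False
    hence sp: "\<sigma> > 0" using sg by simp
    define s where "s = sqrt (2 * ln (2 * real n))"
    have ln0: "ln (2 * real n) > 0" using n1 by simp
    have s0: "s > 0" using ln0 by (simp add: s_def)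
    have ss: "s\<^sup>2 = 2 * ln (2 * real n)" using ln0 by (simp add: s_def)
    define l where "l = s / \<sigma>"
    have l0: "l > 0" using s0 sp by (simp add: l_def)
    define avg where "avg = (\<Sum>E\<in>Pow I. (1/N) * Y E)"
    have "exp (l * avg) = exp (l * (\<Sum>E\<in>Pow I. (1/N) *\<^sub>R Y E))" by (simp add: avg_def)
    also have "\<dots> \<le> (\<Sum>E\<in>Pow I. (1/N) * exp (l * Y E))"
    proof -
      have c: "convex_on UNIV (\<lambda>x. exp (l * x))" by (rule convex_on_exp) (use l0 in simp)
      have s1: "(\<Sum>E\<in>Pow I. 1/N) = 1" using cardPow by (simp add: N_def)
      have "(\<lambda>x. exp (l * x)) (\<Sum>E\<in>Pow I. (1/N) *\<^sub>R Y E) \<le> (\<Sum>E\<in>Pow I. (1/N) * (\<lambda>x. exp (l * x)) (Y E))"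
        by (rule convex_on_sum[OF _ _ c s1]) (use fin N0 in auto)
      thus ?thesis by simp
    qed
    also have "\<dots> \<le> (\<Sum>E\<in>Pow I. (1/N) * (\<Sum>j\<in>J. exp (\<Sum>i\<in>I. rs E i * (l * b j i))
                                 + exp (\<Sum>i\<in>I. rs E i * (- l * b j i))))"
    proof (intro sum_mono mult_left_mono)
      fix E
      obtain j where j: "j \<in> J" "Y E = \<bar>\<Sum>i\<in>I. rs E i * b j i\<bar>" using Yin by blast
      have "exp (l * Y E) \<le> exp (l * (\<Sum>i\<in>I. rs E i * b j i)) + exp (- (l * (\<Sum>i\<in>I. rs E i * b j i)))"
        using j(2) exp_abs_le by simp
      also have "\<dots> = exp (\<Sum>i\<in>I. rs E i * (l * b j i)) + exp (\<Sum>i\<in>I. rs E i * (- l * b j i))"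
        by (simp add: sum_distrib_left sum_negf algebra_simps)
      also have "\<dots> \<le> (\<Sum>j\<in>J. exp (\<Sum>i\<in>I. rs E i * (l * b j i)) + exp (\<Sum>i\<in>I. rs E i * (- l * b j i)))"
        using fin j(1) by (intro member_le_sum) (auto intro: add_nonneg_nonneg)
      finally show "exp (l * Y E) \<le> \<dots>" .
    qed (use N0 in auto)
    also have "\<dots> = (1/N) * (\<Sum>j\<in>J. (\<Sum>E\<in>Pow I. exp (\<Sum>i\<in>I. rs E i * (l * b j i)))
                                 + (\<Sum>E\<in>Pow I. exp (\<Sum>i\<in>I. rs E i * (- l * b j i))))"
    proof -
      have "(\<Sum>E\<in>Pow I. \<Sum>j\<in>J. exp (\<Sum>i\<in>I. rs E i * (l * b j i)) + exp (\<Sum>i\<in>I. rs E i * (- l * b j i)))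
        = (\<Sum>E\<in>Pow I. \<Sum>j\<in>J. exp (\<Sum>i\<in>I. rs E i * (l * b j i))) + (\<Sum>E\<in>Pow I. \<Sum>j\<in>J. exp (\<Sum>i\<in>I. rs E i * (- l * b j i)))"
        by (simp only: sum.distrib)
      also have "\<dots> = (\<Sum>j\<in>J. (\<Sum>E\<in>Pow I. exp (\<Sum>i\<in>I. rs E i * (l * b j i))))
                 + (\<Sum>j\<in>J. (\<Sum>E\<in>Pow I. exp (\<Sum>i\<in>I. rs E i * (- l * b j i))))"
        by (rule arg_cong2[where f="(+)"]; rule sum.swap)
      also have "\<dots> = (\<Sum>j\<in>J. (\<Sum>E\<in>Pow I. exp (\<Sum>i\<in>I. rs E i * (l * b j i)))
                 + (\<Sum>E\<in>Pow I. exp (\<Sum>i\<in>I. rs E i * (- l * b j i))))"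
        by (simp only: sum.distrib)
      finally show ?thesis by (simp only: sum_distrib_left[symmetric])
    qed
    also have "\<dots> \<le> (1/N) * (\<Sum>j\<in>J. N * exp (l\<^sup>2 * \<sigma>\<^sup>2 / 2) + N * exp (l\<^sup>2 * \<sigma>\<^sup>2 / 2))"
    proof (intro mult_left_mono sum_mono add_mono)
      fix j assume j: "j \<in> J"
      have sq: "(\<Sum>i\<in>I. (c * b j i)\<^sup>2) \<le> l\<^sup>2 * \<sigma>\<^sup>2" if "c\<^sup>2 = l\<^sup>2" for c
      proof -
        have "(\<Sum>i\<in>I. (c * b j i)\<^sup>2) = l\<^sup>2 * (\<Sum>i\<in>I. (b j i)\<^sup>2)"
          using that by (simp add: power_mult_distrib sum_distrib_left)
        also have "\<dots> \<le> l\<^sup>2 * \<sigma>\<^sup>2" using b[OF j] by (intro mult_left_mono) auto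
        finally show ?thesis .
      qed
      show "(\<Sum>E\<in>Pow I. exp (\<Sum>i\<in>I. rs E i * (l * b j i))) \<le> N * exp (l\<^sup>2 * \<sigma>\<^sup>2 / 2)"
      proof -
        have "exp ((\<Sum>i\<in>I. (l * b j i)\<^sup>2) / 2) \<le> exp (l\<^sup>2 * \<sigma>\<^sup>2 / 2)"
          using sq[of l] by simp
        hence "2 ^ card I * exp ((\<Sum>i\<in>I. (l * b j i)\<^sup>2) / 2) \<le> N * exp (l\<^sup>2 * \<sigma>\<^sup>2 / 2)"
          unfolding N_def by (rule mult_left_mono) simp
        thus ?thesis using rad_mgf[OF fin(1), of "\<lambda>i. l * b j i"] by linarith
      qed
      show "(\<Sum>E\<in>Pow I. exp (\<Sum>i\<in>I. rs E i * (- l * b j i))) \<le> N * exp (l\<^sup>2 * \<sigma>\<^sup>2 / 2)"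
      proof -
        have "exp ((\<Sum>i\<in>I. (- l * b j i)\<^sup>2) / 2) \<le> exp (l\<^sup>2 * \<sigma>\<^sup>2 / 2)"
          using sq[of "-l"] by simp
        hence "2 ^ card I * exp ((\<Sum>i\<in>I. (- l * b j i)\<^sup>2) / 2) \<le> N * exp (l\<^sup>2 * \<sigma>\<^sup>2 / 2)"
          unfolding N_def by (rule mult_left_mono) simp
        thus ?thesis using rad_mgf[OF fin(1), of "\<lambda>i. - l * b j i"] by linarith
      qed
    qed (use N0 in auto)
    also have "\<dots> = 2 * real n * exp (l\<^sup>2 * \<sigma>\<^sup>2 / 2)"
      using N0 by (simp add: n_def)
    finally have "exp (l * avg) \<le> 2 * real n * exp (l\<^sup>2 * \<sigma>\<^sup>2 / 2)" .
    hence "ln (exp (l * avg)) \<le> ln (2 * real n * exp (l\<^sup>2 * \<sigma>\<^sup>2 / 2))"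
      using n1 by (subst ln_le_cancel_iff) auto
    hence "l * avg \<le> ln (2 * real n) + l\<^sup>2 * \<sigma>\<^sup>2 / 2"
      using n1 by (simp add: ln_mult)
    hence "avg \<le> (ln (2 * real n) + l\<^sup>2 * \<sigma>\<^sup>2 / 2) / l"
      using l0 by (simp add: field_simps)
    also have "\<dots> = \<sigma> * s"
      using sp s0 ss by (simp add: l_def field_simps power2_eq_square)
    finally have "avg \<le> \<sigma> * s" .
    moreover have "avg = (\<Sum>E\<in>Pow I. Y E) / 2 ^ card I"
      by (simp add: avg_def N_def sum_divide_distrib)
    ultimately show ?thesis by (simp add: Y_def s_def n_def)
  qed
qed

lemma sep_card_bound:
  fixes N :: "'a::euclidean_space set"
  assumes fin: "finite N" and sub: "N \<subseteq> cball 0 l" and e: "e > 0" and l: "l \<ge> 0"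
    and sep: "\<And>u v. u \<in> N \<Longrightarrow> v \<in> N \<Longrightarrow> u \<noteq> v \<Longrightarrow> dist u v \<ge> e"
  shows "real (card N) \<le> (1 + 2 * l / e) ^ DIM('a)"
proof -
  define c where "c = unit_ball_vol (real DIM('a))"
  have c0: "c > 0" by (simp add: c_def)
  have disj: "disjoint_family_on (\<lambda>u. ball u (e/2)) N"
    unfolding disjoint_family_on_def
  proof (intro ballI impI equals0I)
    fix u v x assume "u \<in> N" "v \<in> N" "u \<noteq> v" "x \<in> ball u (e/2) \<inter> ball v (e/2)"
    hence "dist u v < e" using dist_triangle[of u v x] dist_commute[of v x] by auto
    thus False using sep \<open>u \<in> N\<close> \<open>v \<in> N\<close> \<open>u \<noteq> v\<close> by force
  qed
  have "(\<Sum>u\<in>N. emeasure lborel (ball u (e/2))) = emeasure lborel (\<Union>u\<in>N. ball u (e/2))"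
    by (rule sum_emeasure) (use disj fin in auto)
  also have "\<dots> \<le> emeasure lborel (ball (0::'a) (l + e/2))"
  proof (rule emeasure_mono)
    show "(\<Union>u\<in>N. ball u (e/2)) \<subseteq> ball 0 (l + e/2)"
    proof
      fix x assume "x \<in> (\<Union>u\<in>N. ball u (e/2))"
      then obtain u where "u \<in> N" "dist u x < e/2" by auto
      moreover have "dist 0 u \<le> l" using sub \<open>u \<in> N\<close> by auto
      moreover have "dist 0 x \<le> dist 0 u + dist u x" by (rule dist_triangle)
      ultimately show "x \<in> ball 0 (l + e/2)" by simp
    qed
  qed auto
  finally have "(\<Sum>u\<in>N. ennreal (c * (e/2) ^ DIM('a))) \<le> ennreal (c * (l + e/2) ^ DIM('a))"
    using e l by (simp add: emeasure_ball c_def)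
  hence "ennreal (real (card N) * (c * (e/2) ^ DIM('a))) \<le> ennreal (c * (l + e/2) ^ DIM('a))"
    using c0 e by (simp add: ennreal_mult ennreal_of_nat_eq_real_of_nat)
  hence "real (card N) * (c * (e/2) ^ DIM('a)) \<le> c * (l + e/2) ^ DIM('a)"
    using c0 e l by (subst (asm) ennreal_le_iff) auto
  hence "real (card N) * (e/2) ^ DIM('a) \<le> (l + e/2) ^ DIM('a)"
    using c0 by (simp add: algebra_simps)
  hence "real (card N) \<le> (l + e/2) ^ DIM('a) / (e/2) ^ DIM('a)"
    using e by (simp add: field_simps)
  also have "\<dots> = (1 + 2 * l / e) ^ DIM('a)"
  proof -
    have "(l + e/2) / (e/2) = 1 + 2 * l / e" using e by (simp add: field_simps)
    thus ?thesis by (simp only: power_divide[symmetric])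
  qed
  finally show ?thesis .
qed

lemma net_exists:
  fixes T :: "'a::euclidean_space set"
  assumes sub: "T \<subseteq> cball 0 l" and ne: "T \<noteq> {}" and e: "e > 0" and l: "l \<ge> 0"
  shows "\<exists>N. finite N \<and> N \<subseteq> T \<and> N \<noteq> {} \<and> real (card N) \<le> (1 + 2 * l / e) ^ DIM('a)
             \<and> (\<forall>t\<in>T. \<exists>u\<in>N. dist t u < e)"
proof -
  define Sep where "Sep N \<longleftrightarrow> finite N \<and> N \<subseteq> T \<and> N \<noteq> {} \<and>
      (\<forall>u\<in>N. \<forall>v\<in>N. u \<noteq> v \<longrightarrow> dist u v \<ge> e)" for N
  obtain t0 where t0: "t0 \<in> T" using ne by auto
  have S0: "Sep {t0}" using t0 by (simp add: Sep_def)
  have bnd: "real (card N) \<le> (1 + 2 * l / e) ^ DIM('a)" if "Sep N" for N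
    using that sub by (intro sep_card_bound[OF _ _ e l]) (auto simp: Sep_def)
  have "\<forall>N. Sep N \<longrightarrow> card N < nat \<lceil>(1 + 2 * l / e) ^ DIM('a)\<rceil> + 1"
  proof (intro allI impI)
    fix N assume "Sep N"
    have "real (card N) \<le> real_of_int \<lceil>(1 + 2 * l / e) ^ DIM('a)\<rceil>"
      using bnd[OF \<open>Sep N\<close>] le_of_int_ceiling order_trans by blast
    hence "of_int (int (card N)) \<le> (of_int \<lceil>(1 + 2 * l / e) ^ DIM('a)\<rceil> :: real)" by simp
    hence "int (card N) \<le> \<lceil>(1 + 2 * l / e) ^ DIM('a)\<rceil>" by (simp only: of_int_le_iff)
    thus "card N < nat \<lceil>(1 + 2 * l / e) ^ DIM('a)\<rceil> + 1" by linarith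
  qed
  then obtain N where N: "Sep N" "\<And>N'. Sep N' \<Longrightarrow> card N' \<le> card N"
    using Lattices_Big.ex_has_greatest_nat[of Sep "{t0}" card] S0 by blast
  have cov: "\<forall>t\<in>T. \<exists>u\<in>N. dist t u < e"
  proof (rule ccontr)
    assume "\<not> ?thesis"
    then obtain t where t: "t \<in> T" "\<And>u. u \<in> N \<Longrightarrow> dist t u \<ge> e" by (auto simp: not_less)
    have tN: "t \<notin> N" using t(2)[of t] e by auto
    have "Sep (insert t N)" using N(1) t by (auto simp: Sep_def dist_commute)
    hence "card (insert t N) \<le> card N" by (rule N(2))
    thus False using tN N(1) by (simp add: Sep_def)
  qed
  show ?thesis using N(1) bnd[OF N(1)] cov by (auto simp: Sep_def)
qed

lemma PiM_reindex_integral: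
  fixes g :: "('i \<Rightarrow> 'a) \<Rightarrow> real"
  assumes P: "prob_space P" and inj: "inj_on \<sigma> K" and \<sigma>: "\<sigma> \<in> K \<rightarrow> K"
    and g: "g \<in> borel_measurable (PiM K (\<lambda>_. P))"
  shows "(\<integral>v. g (\<lambda>n\<in>K. v (\<sigma> n)) \<partial>PiM K (\<lambda>_. P)) = (\<integral>v. g v \<partial>PiM K (\<lambda>_. P))"
proof -
  have T: "(\<lambda>\<omega>. \<lambda>n\<in>K. \<omega> (\<sigma> n)) \<in> measurable (PiM K (\<lambda>_. P)) (PiM K (\<lambda>_. P))"
    by (rule measurable_restrict) (use \<sigma> in \<open>auto intro!: measurable_component_singleton\<close>)
  have "distr (PiM K (\<lambda>_. P)) (\<Pi>\<^sub>M i\<in>K. P) (\<lambda>\<omega>. \<lambda>n\<in>K. \<omega> (\<sigma> n)) = (\<Pi>\<^sub>M i\<in>K. P)"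
    using distr_PiM_reindex[of K "\<lambda>_. P" \<sigma> K] P inj \<sigma> by simp
  hence "(\<integral>v. g v \<partial>PiM K (\<lambda>_. P)) = (\<integral>v. g v \<partial>distr (PiM K (\<lambda>_. P)) (\<Pi>\<^sub>M i\<in>K. P) (\<lambda>\<omega>. \<lambda>n\<in>K. \<omega> (\<sigma> n)))"
    by simp
  also have "\<dots> = (\<integral>v. g (\<lambda>n\<in>K. v (\<sigma> n)) \<partial>PiM K (\<lambda>_. P))"
    by (rule integral_distr[OF T g])
  finally show ?thesis by simp
qed

lemma abs_Max_le:
  fixes f :: "'j \<Rightarrow> real"
  assumes "finite J" "J \<noteq> {}" "\<And>j. j \<in> J \<Longrightarrow> \<bar>f j\<bar> \<le> C"
  shows "\<bar>Max (f ` J)\<bar> \<le> C"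
proof -
  have "Max (f ` J) \<in> f ` J" using assms by (intro Max_in) auto
  then obtain j where "j \<in> J" "Max (f ` J) = f j" by auto
  thus ?thesis using assms by metis
qed

lemma integrable_bounded_prob:
  fixes f :: "'a \<Rightarrow> real"
  assumes "prob_space M" "f \<in> borel_measurable M" "\<And>x. x \<in> space M \<Longrightarrow> \<bar>f x\<bar> \<le> C"
  shows "integrable M f"
proof -
  interpret prob_space M by fact
  show ?thesis by (rule integrable_const_bound[where B=C]) (use assms in auto)
qed

lemma abs_sum_bound:
  fixes g :: "'b \<Rightarrow> real"
  assumes "\<And>i. i \<in> I \<Longrightarrow> \<bar>g i\<bar> \<le> C"
  shows "\<bar>\<Sum>i\<in>I. g i\<bar> \<le> real (card I) * C"
proof -
  have "\<bar>\<Sum>i\<in>I. g i\<bar> \<le> (\<Sum>i\<in>I. \<bar>g i\<bar>)" by (rule sum_abs)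
  also have "\<dots> \<le> (\<Sum>i\<in>I. C)" using assms by (intro sum_mono) auto
  also have "\<dots> \<le> real (card I) * C" by simp
  finally show ?thesis .
qed

lemma abs_Max_sum_le:
  fixes g :: "'j \<Rightarrow> 'b \<Rightarrow> real"
  assumes "finite J" "J \<noteq> {}" "\<And>j i. j \<in> J \<Longrightarrow> i \<in> I \<Longrightarrow> \<bar>g j i\<bar> \<le> C"
  shows "\<bar>Max ((\<lambda>j. \<bar>\<Sum>i\<in>I. g j i\<bar>) ` J)\<bar> \<le> real (card I) * C"
  by (rule abs_Max_le) (use assms in \<open>auto intro!: abs_sum_bound\<close>)

lemma symmetrization:
  fixes P :: "'a measure" and h :: "'j \<Rightarrow> 'a \<Rightarrow> real"
  assumes P: "prob_space P" and J: "finite J" "J \<noteq> {}"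
    and hm[measurable]: "\<And>j. h j \<in> borel_measurable P"
    and hb: "\<And>j w. \<bar>h j w\<bar> \<le> B"
  shows "(\<integral>\<omega>. Max ((\<lambda>j. \<bar>\<Sum>i<m. (h j (\<omega> i) - (\<integral>w. h j w \<partial>P))\<bar>) ` J) \<partial>PiM {..<m} (\<lambda>_. P))
         \<le> 2 * (\<integral>\<omega>. (\<Sum>E\<in>Pow {..<m}. Max ((\<lambda>j. \<bar>\<Sum>i<m. rs E i * h j (\<omega> i)\<bar>) ` J)) / 2 ^ m
                 \<partial>PiM {..<m} (\<lambda>_. P))"
proof -
  interpret PS: product_prob_space "\<lambda>_::nat. P" by (rule product_prob_spaceI) (rule P)
  interpret Pp: prob_space P by (rule P)
  define I where "I = {..<m}"
  define I' where "I' = {m..<2*m}"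
  define K where "K = {..<2*m}"
  define Q where "Q = PiM I (\<lambda>_. P)"
  define Q' where "Q' = PiM I' (\<lambda>_. P)"
  define V where "V = PiM K (\<lambda>_. P)"
  define \<mu> where "\<mu> j = (\<integral>w. h j w \<partial>P)" for j
  define G where "G \<omega> = Max ((\<lambda>j. \<bar>\<Sum>i\<in>I. (h j (\<omega> i) - \<mu> j)\<bar>) ` J)" for \<omega>
  define \<Phi> where "\<Phi> v = Max ((\<lambda>j. \<bar>\<Sum>i\<in>I. (h j (v i) - h j (v (i+m)))\<bar>) ` J)" for v
  define \<Phi>E where "\<Phi>E E v = Max ((\<lambda>j. \<bar>\<Sum>i\<in>I. rs E i * (h j (v i) - h j (v (i+m)))\<bar>) ` J)" for E v
  define A where "A v = (\<Sum>E\<in>Pow I. Max ((\<lambda>j. \<bar>\<Sum>i\<in>I. rs E i * h j (v i)\<bar>) ` J)) / 2 ^ m" for v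
  have B0: "B \<ge> 0" using hb[of undefined undefined] by simp
  have PQ: "prob_space Q" "prob_space Q'" "prob_space V"
    unfolding Q_def Q'_def V_def by (auto intro!: prob_space_PiM P)
  have muB: "\<bar>\<mu> j\<bar> \<le> B" for j
  proof -
    have "\<bar>\<mu> j\<bar> \<le> (\<integral>w. \<bar>h j w\<bar> \<partial>P)" unfolding \<mu>_def by (rule integral_abs_bound)
    also have "\<dots> \<le> (\<integral>w. B \<partial>P)"
      by (intro integral_mono integrable_bounded_prob[OF P, where C=B]) (use hb B0 in auto)
    finally show ?thesis by (simp add: PS.M.prob_space)
  qed
  have rsabs: "\<bar>rs E i\<bar> = 1" for E i by (simp add: rs_def)
  have compQ: "(\<lambda>v. v i) \<in> measurable Q P" if "i \<in> I" for i
    unfolding Q_def using that by (intro measurable_component_singleton) auto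
  have Gm: "G \<in> borel_measurable Q" unfolding G_def
    by (intro borel_measurable_Max borel_measurable_abs borel_measurable_sum borel_measurable_diff
        borel_measurable_const measurable_compose[OF compQ hm]) (auto simp: J)
  have comp: "(\<lambda>v. v i) \<in> measurable V P" if "i < 2*m" for i
    unfolding V_def K_def using that by (intro measurable_component_singleton) auto
  have \<Phi>m: "\<Phi> \<in> borel_measurable V" unfolding \<Phi>_def
    by (intro borel_measurable_Max borel_measurable_abs borel_measurable_sum borel_measurable_diff
        measurable_compose[OF comp hm]) (auto simp: I_def J)
  have \<Phi>Em: "\<Phi>E E \<in> borel_measurable V" for E unfolding \<Phi>E_def
    by (intro borel_measurable_Max borel_measurable_abs borel_measurable_sum borel_measurable_diff
        borel_measurable_times borel_measurable_const
        measurable_compose[OF comp hm]) (auto simp: I_def J)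
  have Am: "A \<in> borel_measurable (PiM L (\<lambda>_. P))" if "I \<subseteq> L" for L
  proof -
    have c: "(\<lambda>v. v i) \<in> measurable (PiM L (\<lambda>_. P)) P" if "i \<in> I" for i
      using that \<open>I \<subseteq> L\<close> by (intro measurable_component_singleton) auto
    show ?thesis unfolding A_def
      by (intro borel_measurable_Max borel_measurable_abs borel_measurable_sum borel_measurable_divide
        borel_measurable_times borel_measurable_const
        measurable_compose[OF c hm]) (auto simp: I_def J)
  qed
  have cardI: "card I = m" by (simp add: I_def)
  have Gb: "\<bar>G \<omega>\<bar> \<le> real m * (2*B)" for \<omega>
    unfolding G_def
  proof (rule abs_Max_sum_le[OF J, where I=I, unfolded cardI])
    fix j i show "\<bar>h j (\<omega> i) - \<mu> j\<bar> \<le> 2 * B"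
      using hb[of j "\<omega> i"] muB[of j] by (simp add: abs_le_iff)
  qed
  have \<Phi>b: "\<bar>\<Phi> v\<bar> \<le> real m * (2*B)" for v
    unfolding \<Phi>_def
  proof (rule abs_Max_sum_le[OF J, where I=I, unfolded cardI])
    fix j i show "\<bar>h j (v i) - h j (v (i+m))\<bar> \<le> 2 * B"
      using hb[of j "v i"] hb[of j "v (i+m)"] by (simp add: abs_le_iff)
  qed
  have \<Phi>Eb: "\<bar>\<Phi>E E v\<bar> \<le> real m * (2*B)" for E v
    unfolding \<Phi>E_def
  proof (rule abs_Max_sum_le[OF J, where I=I, unfolded cardI])
    fix j i
    have "\<bar>h j (v i) - h j (v (i+m))\<bar> \<le> 2*B" using hb[of j "v i"] hb[of j "v (i+m)"] by (simp add: abs_le_iff)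
    thus "\<bar>rs E i * (h j (v i) - h j (v (i + m)))\<bar> \<le> 2 * B" by (simp add: abs_mult rsabs)
  qed
  interpret Qp: prob_space Q by (rule PQ(1))
  interpret Q'p: prob_space Q' by (rule PQ(2))
  interpret QQ: pair_prob_space Q Q' ..
  have IK: "I \<union> I' = K" "I \<inter> I' = {}" by (auto simp: I_def I'_def K_def)
  have merge: "distr (Q \<Otimes>\<^sub>M Q') V (merge I I') = V"
    using PS.distr_merge[of I I'] IK unfolding Q_def Q'_def V_def by (simp add: I_def I'_def)
  have mm: "merge I I' \<in> measurable (Q \<Otimes>\<^sub>M Q') V"
    unfolding Q_def Q'_def V_def IK(1)[symmetric] by (rule measurable_merge)
  have \<Phi>mm: "(\<lambda>p. \<Phi> (merge I I' p)) \<in> borel_measurable (Q \<Otimes>\<^sub>M Q')"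
    by (rule measurable_compose[OF mm \<Phi>m])
  have \<Phi>int: "integrable (Q \<Otimes>\<^sub>M Q') (\<lambda>p. \<Phi> (merge I I' p))"
    by (rule integrable_bounded_prob[OF _ \<Phi>mm \<Phi>b]) (rule QQ.prob_space_axioms)
  have stepA1: "(\<integral>v. \<Phi> v \<partial>V) = (\<integral>x. (\<integral>y. \<Phi> (merge I I' (x,y)) \<partial>Q') \<partial>Q)"
  proof -
    have "(\<integral>v. \<Phi> v \<partial>V) = (\<integral>p. \<Phi> (merge I I' p) \<partial>(Q \<Otimes>\<^sub>M Q'))"
      using integral_distr[OF mm \<Phi>m] merge by simp
    also have "\<dots> = (\<integral>x. (\<integral>y. \<Phi> (merge I I' (x,y)) \<partial>Q') \<partial>Q)"
      using QQ.integral_fst'[OF \<Phi>int] by simp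
    finally show ?thesis .
  qed
  have stepA2: "G x \<le> (\<integral>y. \<Phi> (merge I I' (x,y)) \<partial>Q')" if x: "x \<in> space Q" for x
    unfolding G_def
  proof (rule Max.boundedI)
    show "finite ((\<lambda>j. \<bar>\<Sum>i\<in>I. h j (x i) - \<mu> j\<bar>) ` J)" "(\<lambda>j. \<bar>\<Sum>i\<in>I. h j (x i) - \<mu> j\<bar>) ` J \<noteq> {}"
      using J by auto
    fix a assume "a \<in> (\<lambda>j. \<bar>\<Sum>i\<in>I. h j (x i) - \<mu> j\<bar>) ` J"
    then obtain j where j: "j \<in> J" "a = \<bar>\<Sum>i\<in>I. h j (x i) - \<mu> j\<bar>" by auto
    have cy: "(\<lambda>y. y (i+m)) \<in> measurable Q' P" if "i \<in> I" for i
      unfolding Q'_def using that by (intro measurable_component_singleton) (auto simp: I_def I'_def)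
    have hint: "integrable Q' (\<lambda>y. h j (y (i+m)))" if "i \<in> I" for i
      by (rule integrable_bounded_prob[OF PQ(2) measurable_compose[OF cy[OF that] hm]]) (rule hb)
    have cmp: "(\<integral>y. h j (y (i+m)) \<partial>Q') = \<mu> j" if "i \<in> I" for i
    proof -
      have "distr Q' P (\<lambda>y. y (i+m)) = P"
        unfolding Q'_def using that by (intro distr_PiM_component P) (auto simp: I_def I'_def)
      hence "(\<integral>y. h j (y (i+m)) \<partial>Q') = (\<integral>w. h j w \<partial>distr Q' P (\<lambda>y. y (i+m)))"
        using integral_distr[OF cy[OF that] hm] by simp
      also have "\<dots> = \<mu> j" using \<open>distr Q' P (\<lambda>y. y (i+m)) = P\<close> by (simp add: \<mu>_def)
      finally show ?thesis .
    qed
    have "(\<Sum>i\<in>I. h j (x i) - \<mu> j) = (\<integral>y. (\<Sum>i\<in>I. h j (x i) - h j (y (i+m))) \<partial>Q')"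
    proof -
      have "(\<integral>y. (\<Sum>i\<in>I. h j (x i) - h j (y (i+m))) \<partial>Q') = (\<Sum>i\<in>I. (\<integral>y. h j (x i) - h j (y (i+m)) \<partial>Q'))"
        by (rule Bochner_Integration.integral_sum) (use hint in auto)
      also have "\<dots> = (\<Sum>i\<in>I. h j (x i) - \<mu> j)"
        using hint cmp by (intro sum.cong refl) (simp add: Q'p.prob_space)
      finally show ?thesis by simp
    qed
    hence "a = \<bar>\<integral>y. (\<Sum>i\<in>I. h j (x i) - h j (y (i+m))) \<partial>Q'\<bar>" using j by simp
    also have "\<dots> \<le> (\<integral>y. \<bar>\<Sum>i\<in>I. h j (x i) - h j (y (i+m))\<bar> \<partial>Q')" by (rule integral_abs_bound)
    also have "\<dots> \<le> (\<integral>y. \<Phi> (merge I I' (x,y)) \<partial>Q')"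
    proof (rule integral_mono)
      show "integrable Q' (\<lambda>y. \<bar>\<Sum>i\<in>I. h j (x i) - h j (y (i+m))\<bar>)"
        using hint by (intro integrable_abs integrable_sum integrable_diff) auto
      have xy: "(\<lambda>y. merge I I' (x, y)) \<in> measurable Q' V"
        using mm x by measurable
      show "integrable Q' (\<lambda>y. \<Phi> (merge I I' (x, y)))"
        by (rule integrable_bounded_prob[OF PQ(2) measurable_compose[OF xy \<Phi>m] \<Phi>b])
      fix y assume "y \<in> space Q'"
      have "\<bar>\<Sum>i\<in>I. h j (x i) - h j (y (i+m))\<bar>
          = \<bar>\<Sum>i\<in>I. h j (merge I I' (x,y) i) - h j (merge I I' (x,y) (i+m))\<bar>"
        by (intro arg_cong[where f=abs] sum.cong refl) (auto simp: merge_def I_def I'_def)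
      also have "\<dots> \<le> \<Phi> (merge I I' (x,y))"
        unfolding \<Phi>_def using J j by (intro Max_ge) auto
      finally show "\<bar>\<Sum>i\<in>I. h j (x i) - h j (y (i+m))\<bar> \<le> \<Phi> (merge I I' (x,y))" .
    qed
    finally show "a \<le> (\<integral>y. \<Phi> (merge I I' (x,y)) \<partial>Q')" .
  qed
  have stepA: "(\<integral>\<omega>. G \<omega> \<partial>Q) \<le> (\<integral>v. \<Phi> v \<partial>V)"
    unfolding stepA1
    by (intro integral_mono stepA2 integrable_bounded_prob[OF PQ(1) Gm Gb] QQ.integrable_fst'[OF \<Phi>int])
  define \<sigma> where "\<sigma> E n = (if n \<in> E then n + m else if m \<le> n \<and> n - m \<in> E then n - m else n)" for E n
  have \<sigma>inv: "\<sigma> E (\<sigma> E n) = n" if "E \<subseteq> I" for E n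
    using that by (auto simp: \<sigma>_def I_def subset_iff)
  have \<sigma>inj: "inj_on (\<sigma> E) K" if "E \<subseteq> I" for E
    by (rule inj_on_inverseI[where g="\<sigma> E"]) (rule \<sigma>inv[OF that])
  have \<sigma>K: "\<sigma> E \<in> K \<rightarrow> K" if "E \<subseteq> I" for E
    using that by (auto simp: \<sigma>_def I_def K_def subset_iff)
  have \<Phi>\<sigma>: "\<Phi> (\<lambda>n\<in>K. v (\<sigma> E n)) = \<Phi>E E v" if "E \<subseteq> I" for E v
    unfolding \<Phi>_def \<Phi>E_def
  proof (intro arg_cong[where f=Max] image_cong refl arg_cong[where f=abs] sum.cong)
    fix j i assume "i \<in> I"
    thus "h j ((\<lambda>n\<in>K. v (\<sigma> E n)) i) - h j ((\<lambda>n\<in>K. v (\<sigma> E n)) (i + m)) = rs E i * (h j (v i) - h j (v (i + m)))"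
      using that by (auto simp: \<sigma>_def I_def K_def rs_def subset_iff)
  qed
  have stepB: "(\<integral>v. \<Phi> v \<partial>V) = (\<integral>v. \<Phi>E E v \<partial>V)" if "E \<subseteq> I" for E
  proof -
    have "(\<integral>v. \<Phi> (\<lambda>n\<in>K. v (\<sigma> E n)) \<partial>V) = (\<integral>v. \<Phi> v \<partial>V)"
      unfolding V_def by (rule PiM_reindex_integral[OF P \<sigma>inj[OF that] \<sigma>K[OF that]]) (use \<Phi>m V_def in simp)
    thus ?thesis using \<Phi>\<sigma>[OF that] by simp
  qed
  have cardPow: "card (Pow I) = 2 ^ m" by (simp add: I_def card_Pow)
  define M1 where "M1 E v = Max ((\<lambda>j. \<bar>\<Sum>i\<in>I. rs E i * h j (v i)\<bar>) ` J)" for E v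
  have A_alt: "A v = (\<Sum>E\<in>Pow I. M1 E v) / 2 ^ m" for v by (simp add: A_def M1_def)
  have M1b: "\<bar>M1 E v\<bar> \<le> real m * B" for E v
    unfolding M1_def
    by (rule abs_Max_sum_le[OF J, where I=I, unfolded cardI]) (simp add: abs_mult rsabs hb)
  have Ab: "\<bar>A v\<bar> \<le> real m * B" for v
  proof -
    have "\<bar>\<Sum>E\<in>Pow I. M1 E v\<bar> \<le> real (card (Pow I)) * (real m * B)"
      by (rule abs_sum_bound) (rule M1b)
    thus ?thesis unfolding A_alt cardPow by (simp add: field_simps)
  qed
  have ptw: "\<Phi>E E v \<le> M1 E v + M1 E (\<lambda>i. v (i + m))" for E v
    unfolding \<Phi>E_def
  proof (rule Max.boundedI)
    show "finite ((\<lambda>j. \<bar>\<Sum>i\<in>I. rs E i * (h j (v i) - h j (v (i+m)))\<bar>) ` J)"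
         "(\<lambda>j. \<bar>\<Sum>i\<in>I. rs E i * (h j (v i) - h j (v (i+m)))\<bar>) ` J \<noteq> {}" using J by auto
    fix a assume "a \<in> (\<lambda>j. \<bar>\<Sum>i\<in>I. rs E i * (h j (v i) - h j (v (i+m)))\<bar>) ` J"
    then obtain j where j: "j \<in> J" "a = \<bar>\<Sum>i\<in>I. rs E i * (h j (v i) - h j (v (i+m)))\<bar>" by auto
    have "a = \<bar>(\<Sum>i\<in>I. rs E i * h j (v i)) - (\<Sum>i\<in>I. rs E i * h j (v (i+m)))\<bar>"
      using j by (simp add: algebra_simps sum_subtractf)
    also have "\<dots> \<le> \<bar>\<Sum>i\<in>I. rs E i * h j (v i)\<bar> + \<bar>\<Sum>i\<in>I. rs E i * h j (v (i+m))\<bar>"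
      by (rule abs_triangle_ineq4)
    also have "\<dots> \<le> M1 E v + M1 E (\<lambda>i. v (i + m))"
      unfolding M1_def using J j by (intro add_mono Max_ge) auto
    finally show "a \<le> M1 E v + M1 E (\<lambda>i. v (i + m))" .
  qed
  have AmV: "A \<in> borel_measurable V" unfolding V_def by (rule Am) (auto simp: I_def K_def)
  have shm: "(\<lambda>v. \<lambda>n\<in>K. v (\<sigma> I n)) \<in> measurable V V"
    unfolding V_def by (rule measurable_restrict) (use \<sigma>K[of I] in \<open>auto intro!: measurable_component_singleton\<close>)
  have Ash: "A (\<lambda>i. v (i + m)) = A (\<lambda>n\<in>K. v (\<sigma> I n))" for v
    unfolding A_def by (intro arg_cong2[where f="(/)"] sum.cong refl arg_cong[where f=Max] image_cong
        arg_cong[where f=abs]) (auto simp: \<sigma>_def I_def K_def)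
  have AshV: "(\<lambda>v. A (\<lambda>i. v (i + m))) \<in> borel_measurable V"
    unfolding Ash by (rule measurable_compose[OF shm AmV])
  have C1: "(\<integral>v. \<Phi> v \<partial>V) = (\<integral>v. (\<Sum>E\<in>Pow I. \<Phi>E E v) / 2 ^ m \<partial>V)"
  proof -
    have "(\<integral>v. (\<Sum>E\<in>Pow I. \<Phi>E E v) / 2 ^ m \<partial>V) = (\<Sum>E\<in>Pow I. (\<integral>v. \<Phi>E E v \<partial>V)) / 2 ^ m"
      by (subst integral_divide_zero, subst Bochner_Integration.integral_sum)
         (auto intro!: Bochner_Integration.integrable_sum integrable_bounded_prob[OF PQ(3) \<Phi>Em \<Phi>Eb])
    also have "\<dots> = (\<Sum>E\<in>Pow I. (\<integral>v. \<Phi> v \<partial>V)) / 2 ^ m"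
      using stepB by (intro arg_cong2[where f="(/)"] sum.cong) auto
    also have "\<dots> = (\<integral>v. \<Phi> v \<partial>V)" by (simp add: cardPow)
    finally show ?thesis by simp
  qed
  have C2: "(\<integral>v. (\<Sum>E\<in>Pow I. \<Phi>E E v) / 2 ^ m \<partial>V) \<le> (\<integral>v. A v + A (\<lambda>i. v (i + m)) \<partial>V)"
  proof (rule integral_mono)
    show "integrable V (\<lambda>v. (\<Sum>E\<in>Pow I. \<Phi>E E v) / 2 ^ m)"
      by (intro integrable_divide Bochner_Integration.integrable_sum integrable_bounded_prob[OF PQ(3) \<Phi>Em \<Phi>Eb])
    show "integrable V (\<lambda>v. A v + A (\<lambda>i. v (i + m)))"
      by (intro Bochner_Integration.integrable_add integrable_bounded_prob[OF PQ(3) AmV Ab] integrable_bounded_prob[OF PQ(3) AshV Ab])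
    fix v
    have "(\<Sum>E\<in>Pow I. \<Phi>E E v) \<le> (\<Sum>E\<in>Pow I. M1 E v + M1 E (\<lambda>i. v (i + m)))"
      by (intro sum_mono ptw)
    thus "(\<Sum>E\<in>Pow I. \<Phi>E E v) / 2 ^ m \<le> A v + A (\<lambda>i. v (i + m))"
      unfolding A_alt by (simp add: sum.distrib add_divide_distrib[symmetric] divide_right_mono)
  qed
  have C3: "(\<integral>v. A (\<lambda>i. v (i + m)) \<partial>V) = (\<integral>v. A v \<partial>V)"
    unfolding Ash V_def
    by (rule PiM_reindex_integral[OF P \<sigma>inj \<sigma>K]) (use AmV V_def in auto)
  have C4: "(\<integral>v. A v \<partial>V) = (\<integral>v. A v \<partial>Q)"
  proof -
    have rm: "(\<lambda>f. restrict f I) \<in> measurable V Q"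
      unfolding V_def Q_def by (rule measurable_restrict_subset) (auto simp: I_def K_def)
    have "Q = distr V Q (\<lambda>f. restrict f I)"
      unfolding Q_def V_def by (rule PS.distr_restrict) (auto simp: I_def K_def)
    hence "(\<integral>v. A v \<partial>Q) = (\<integral>v. A (restrict v I) \<partial>V)"
      using integral_distr[OF rm Am[of I, folded Q_def]] by simp
    also have "\<dots> = (\<integral>v. A v \<partial>V)"
      unfolding A_def by (intro Bochner_Integration.integral_cong refl arg_cong2[where f="(/)"] sum.cong
          arg_cong[where f=Max] image_cong arg_cong[where f=abs]) auto
    finally show ?thesis by simp
  qed
  have "(\<integral>\<omega>. G \<omega> \<partial>Q) \<le> 2 * (\<integral>v. A v \<partial>Q)"
  proof -
    have "(\<integral>\<omega>. G \<omega> \<partial>Q) \<le> (\<integral>v. A v + A (\<lambda>i. v (i + m)) \<partial>V)"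
      using stepA C1 C2 by linarith
    also have "\<dots> = (\<integral>v. A v \<partial>V) + (\<integral>v. A (\<lambda>i. v (i + m)) \<partial>V)"
      by (intro Bochner_Integration.integral_add integrable_bounded_prob[OF PQ(3) AmV Ab]
          integrable_bounded_prob[OF PQ(3) AshV Ab])
    finally show ?thesis using C3 C4 by simp
  qed
  thus ?thesis unfolding G_def A_def \<mu>_def Q_def I_def by simp
qed

lemma cos_lip: "\<bar>cos a - cos b\<bar> \<le> \<bar>a - b\<bar>" for a b :: real
proof -
  have "\<bar>cos a - cos b\<bar> = 2 * \<bar>sin ((a + b) / 2)\<bar> * \<bar>sin ((b - a) / 2)\<bar>"
    by (simp add: cos_diff_cos abs_mult)
  also have "\<dots> \<le> 2 * 1 * \<bar>(b - a) / 2\<bar>"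
    by (intro mult_mono abs_sin_x_le_abs_x) auto
  finally show ?thesis by simp
qed

lemma inner_cos_lip:
  fixes w u v :: "'a::real_inner"
  shows "\<bar>cos (w \<bullet> u) - cos (w \<bullet> v)\<bar> \<le> norm w * norm (u - v)"
proof -
  have "\<bar>cos (w \<bullet> u) - cos (w \<bullet> v)\<bar> \<le> \<bar>w \<bullet> u - w \<bullet> v\<bar>" by (rule cos_lip)
  also have "\<dots> = \<bar>w \<bullet> (u - v)\<bar>" by (simp add: inner_diff_right)
  also have "\<dots> \<le> norm w * norm (u - v)" by (rule Cauchy_Schwarz_ineq2)
  finally show ?thesis .
qed

definition Sfun :: "nat \<Rightarrow> ('a \<Rightarrow> real) \<Rightarrow> (nat \<Rightarrow> 'a::real_inner) \<Rightarrow> 'a \<Rightarrow> real" where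
  "Sfun m k \<omega> t = (\<Sum>i<m. cos (\<omega> i \<bullet> t)) / m - k t"

definition Mx :: "nat \<Rightarrow> (nat \<Rightarrow> 'a::real_normed_vector) \<Rightarrow> real" where
  "Mx m \<omega> = Max ((\<lambda>i. norm (\<omega> i)) ` {..<m})"

lemma Mx_ge: "i < m \<Longrightarrow> norm (\<omega> i) \<le> Mx m \<omega>"
  unfolding Mx_def by (intro Max_ge) auto

lemma Mx_nonneg: "m > 0 \<Longrightarrow> Mx m \<omega> \<ge> 0"
  using Mx_ge[of 0 m \<omega>] norm_ge_zero[of "\<omega> 0"] by linarith

lemma key_link:
  fixes P :: "'a::euclidean_space measure" and L :: "('a \<times> 'a) set" and k :: "'a \<Rightarrow> real"
  assumes P: "prob_space P" and sP: "sets P = sets borel"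
    and krep: "\<And>t. k t = (\<integral>w. cos (w \<bullet> t) \<partial>P)"
    and m: "m > 0" and L: "finite L" "L \<noteq> {}" and r: "r \<ge> 0"
    and Lr: "\<And>u v. (u,v) \<in> L \<Longrightarrow> norm (u - v) \<le> r"
  shows "(\<integral>\<^sup>+\<omega>. ennreal (Max ((\<lambda>(u,v). \<bar>Sfun m k \<omega> u - Sfun m k \<omega> v\<bar>) ` L)) \<partial>PiM {..<m} (\<lambda>_. P))
     \<le> ennreal (2 * r * sqrt (2 * ln (2 * real (card L))) / sqrt m) * (\<integral>\<^sup>+\<omega>. ennreal (Mx m \<omega>) \<partial>PiM {..<m} (\<lambda>_. P))"
proof -
  define Q where "Q = PiM {..<m} (\<lambda>_. P)"
  interpret Pp: prob_space P by (rule P)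
  have PQ: "prob_space Q" unfolding Q_def by (auto intro!: prob_space_PiM P)
  define h where "h = (\<lambda>(u::'a,v::'a) (w::'a). cos (w \<bullet> u) - cos (w \<bullet> v))"
  have cm: "(\<lambda>w. cos (w \<bullet> t)) \<in> borel_measurable P" for t :: 'a
    by (subst measurable_cong_sets[OF sP refl]) measurable
  have hm: "h j \<in> borel_measurable P" for j
    unfolding h_def by (cases j) (auto intro!: borel_measurable_diff cm)
  have hb: "\<bar>h j w\<bar> \<le> 2" for j w
  proof (cases j)
    case (Pair a b)
    have c: "cos (w \<bullet> a) \<le> 1" "cos (w \<bullet> b) \<le> 1" "-1 \<le> cos (w \<bullet> a)" "-1 \<le> cos (w \<bullet> b)"
      by (rule cos_le_one cos_ge_minus_one)+
    show ?thesis unfolding Pair h_def abs_le_iff prod.case by (intro conjI) (use c in linarith)+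
  qed
  have cint: "integrable P (\<lambda>w. cos (w \<bullet> t))" for t :: 'a
    by (rule integrable_bounded_prob[OF P cm, where C=1]) simp
  have mu: "(\<integral>w. h (u,v) w \<partial>P) = k u - k v" for u v
    unfolding h_def krep using cint by (simp add: Bochner_Integration.integral_diff)
  define G where "G \<omega> = Max ((\<lambda>j. \<bar>\<Sum>i<m. (h j (\<omega> i) - (\<integral>w. h j w \<partial>P))\<bar>) ` L)" for \<omega>
  define A where "A \<omega> = (\<Sum>E\<in>Pow {..<m}. Max ((\<lambda>j. \<bar>\<Sum>i<m. rs E i * h j (\<omega> i)\<bar>) ` L)) / 2 ^ m" for \<omega>
  have sym: "(\<integral>\<omega>. G \<omega> \<partial>Q) \<le> 2 * (\<integral>\<omega>. A \<omega> \<partial>Q)"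
    unfolding G_def A_def Q_def by (rule symmetrization[OF P L hm hb])
  have compQ: "(\<lambda>v. v i) \<in> measurable Q P" if "i < m" for i
    unfolding Q_def using that by (intro measurable_component_singleton) auto
  have Gm: "G \<in> borel_measurable Q" unfolding G_def
    by (intro borel_measurable_Max borel_measurable_abs borel_measurable_sum borel_measurable_diff
        borel_measurable_const measurable_compose[OF compQ hm]) (auto simp: L)
  have Am: "A \<in> borel_measurable Q" unfolding A_def
    by (intro borel_measurable_Max borel_measurable_abs borel_measurable_sum borel_measurable_divide
        borel_measurable_times borel_measurable_const measurable_compose[OF compQ hm]) (auto simp: L)
  have G0: "G \<omega> \<ge> 0" for \<omega>
  proof -
    obtain j where "j \<in> L" using L by auto
    hence "\<bar>\<Sum>i<m. (h j (\<omega> i) - (\<integral>w. h j w \<partial>P))\<bar> \<le> G \<omega>"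
      unfolding G_def using L by (intro Max_ge) auto
    thus ?thesis by linarith
  qed
  have Gb: "\<bar>G \<omega>\<bar> \<le> real m * 4" for \<omega>
  proof -
    have "\<bar>G \<omega>\<bar> \<le> real (card {..<m}) * 4" unfolding G_def
    proof (rule abs_Max_sum_le[OF L])
      fix j i
      have "\<bar>\<integral>w. h j w \<partial>P\<bar> \<le> 2"
      proof -
        have "\<bar>\<integral>w. h j w \<partial>P\<bar> \<le> (\<integral>w. 2 \<partial>P)"
          by (rule integral_abs_bound_integral) (auto intro!: integrable_bounded_prob[OF P hm, where C=2] hb)
        thus ?thesis by (simp add: Pp.prob_space)
      qed
      thus "\<bar>h j (\<omega> i) - (\<integral>w. h j w \<partial>P)\<bar> \<le> 4" using hb[of j "\<omega> i"] by (simp add: abs_le_iff)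
    qed
    thus ?thesis by simp
  qed
  have A0: "A \<omega> \<ge> 0" for \<omega>
  proof -
    have "0 \<le> Max ((\<lambda>j. \<bar>\<Sum>i<m. rs E i * h j (\<omega> i)\<bar>) ` L)" for E
    proof -
      obtain j where "j \<in> L" using L by auto
      hence "\<bar>\<Sum>i<m. rs E i * h j (\<omega> i)\<bar> \<le> Max ((\<lambda>j. \<bar>\<Sum>i<m. rs E i * h j (\<omega> i)\<bar>) ` L)"
        using L by (intro Max_ge) auto
      thus ?thesis by linarith
    qed
    hence "0 \<le> (\<Sum>E\<in>Pow {..<m}. Max ((\<lambda>j. \<bar>\<Sum>i<m. rs E i * h j (\<omega> i)\<bar>) ` L))"
      by (intro sum_nonneg) auto
    thus ?thesis unfolding A_def by simp
  qed
  have Ab: "\<bar>A \<omega>\<bar> \<le> real m * 2" for \<omega>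
  proof -
    have "\<bar>Max ((\<lambda>j. \<bar>\<Sum>i<m. rs E i * h j (\<omega> i)\<bar>) ` L)\<bar> \<le> real m * 2" for E
      using abs_Max_sum_le[OF L, of "{..<m}" "\<lambda>j i. rs E i * h j (\<omega> i)" 2]
      by (simp add: abs_mult rs_def hb)
    hence "\<bar>\<Sum>E\<in>Pow {..<m}. Max ((\<lambda>j. \<bar>\<Sum>i<m. rs E i * h j (\<omega> i)\<bar>) ` L)\<bar> \<le> real (card (Pow {..<m::nat})) * (real m * 2)"
      by (intro abs_sum_bound) auto
    thus ?thesis unfolding A_def by (simp add: card_Pow field_simps)
  qed
  have Gint: "integrable Q G" by (rule integrable_bounded_prob[OF PQ Gm Gb])
  have Aint: "integrable Q A" by (rule integrable_bounded_prob[OF PQ Am Ab])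
  define s where "s = sqrt (2 * ln (2 * real (card L)))"
  define c where "c = r * sqrt m * s"
  have s0: "s \<ge> 0" unfolding s_def
  proof -
    have "card L \<ge> 1" using L by (simp add: Suc_le_eq card_gt_0_iff)
    hence "1 \<le> 2 * real (card L)" by simp
    thus "0 \<le> sqrt (2 * ln (2 * real (card L)))" by simp
  qed
  have c0: "c \<ge> 0" unfolding c_def using r s0 by simp
  have pt1: "Max ((\<lambda>(u,v). \<bar>Sfun m k \<omega> u - Sfun m k \<omega> v\<bar>) ` L) \<le> G \<omega> / m" for \<omega>
  proof (rule Max.boundedI)
    show "finite ((\<lambda>(u,v). \<bar>Sfun m k \<omega> u - Sfun m k \<omega> v\<bar>) ` L)" "(\<lambda>(u,v). \<bar>Sfun m k \<omega> u - Sfun m k \<omega> v\<bar>) ` L \<noteq> {}"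
      using L by auto
    fix a assume "a \<in> (\<lambda>(u,v). \<bar>Sfun m k \<omega> u - Sfun m k \<omega> v\<bar>) ` L"
    then obtain u v where uv: "(u,v) \<in> L" "a = \<bar>Sfun m k \<omega> u - Sfun m k \<omega> v\<bar>" by auto
    have "Sfun m k \<omega> u - Sfun m k \<omega> v = (\<Sum>i<m. (h (u,v) (\<omega> i) - (k u - k v))) / m"
      using m by (simp add: Sfun_def h_def sum_subtractf sum.distrib field_simps)
    hence "Sfun m k \<omega> u - Sfun m k \<omega> v = (\<Sum>i<m. (h (u,v) (\<omega> i) - (\<integral>w. h (u,v) w \<partial>P))) / m"
      by (simp only: mu)
    hence "a = \<bar>\<Sum>i<m. (h (u,v) (\<omega> i) - (\<integral>w. h (u,v) w \<partial>P))\<bar> / m"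
      using uv m by simp
    also have "\<dots> \<le> G \<omega> / m"
      unfolding G_def using uv L m by (intro divide_right_mono Max_ge) auto
    finally show "a \<le> G \<omega> / m" .
  qed
  have pt2: "A \<omega> \<le> c * Mx m \<omega>" for \<omega>
  proof -
    have "A \<omega> \<le> (r * sqrt m * Mx m \<omega>) * sqrt (2 * ln (2 * real (card L)))"
      unfolding A_def
    proof (rule rad_max[where I="{..<m}", simplified])
      show "finite L" "L \<noteq> {}" by (fact L)+
      show "0 \<le> r * sqrt (real m) * Mx m \<omega>" using r Mx_nonneg[OF m, of \<omega>] by (intro mult_nonneg_nonneg) auto
      fix j assume "j \<in> L"
      obtain u v where j: "j = (u,v)" by (cases j)
      have "(\<Sum>i<m. (h j (\<omega> i))\<^sup>2) \<le> (\<Sum>i<m. (Mx m \<omega> * r)\<^sup>2)"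
      proof (intro sum_mono)
        fix i assume "i \<in> {..<m}"
        have "\<bar>h j (\<omega> i)\<bar> \<le> norm (\<omega> i) * norm (u - v)"
          unfolding j h_def by (simp add: inner_cos_lip)
        also have "\<dots> \<le> Mx m \<omega> * r"
          using Mx_ge[of i m \<omega>] Mx_nonneg[OF m, of \<omega>] Lr[of u v] \<open>j \<in> L\<close> j \<open>i \<in> {..<m}\<close>
          by (intro mult_mono) auto
        finally have "\<bar>h j (\<omega> i)\<bar>\<^sup>2 \<le> (Mx m \<omega> * r)\<^sup>2"
          by (intro power_mono) auto
        thus "(h j (\<omega> i))\<^sup>2 \<le> (Mx m \<omega> * r)\<^sup>2" by simp
      qed
      also have "\<dots> = (r * sqrt (real m) * Mx m \<omega>)\<^sup>2"
        by (simp add: power_mult_distrib)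
      finally show "(\<Sum>i<m. (h j (\<omega> i))\<^sup>2) \<le> (r * sqrt (real m) * Mx m \<omega>)\<^sup>2" .
    qed
    thus ?thesis by (simp add: c_def s_def mult_ac)
  qed
  have nm: "(norm :: 'a \<Rightarrow> real) \<in> borel_measurable P"
    by (subst measurable_cong_sets[OF sP refl]) measurable
  have Mxm: "Mx m \<in> borel_measurable Q" unfolding Mx_def
    by (intro borel_measurable_Max measurable_compose[OF compQ nm]) auto
  have e1: "(\<integral>\<^sup>+\<omega>. ennreal (Max ((\<lambda>(u,v). \<bar>Sfun m k \<omega> u - Sfun m k \<omega> v\<bar>) ` L)) \<partial>Q)
      \<le> (\<integral>\<^sup>+\<omega>. ennreal (G \<omega> / m) \<partial>Q)"
    by (intro nn_integral_mono ennreal_leI pt1)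
  also have "\<dots> = ennreal (\<integral>\<omega>. G \<omega> / m \<partial>Q)"
    by (rule nn_integral_eq_integral) (use Gint G0 m in auto)
  also have "\<dots> \<le> ennreal (2 / m * (\<integral>\<omega>. A \<omega> \<partial>Q))"
    using sym m by (intro ennreal_leI) (simp add: field_simps)
  also have "\<dots> = ennreal (2 / m) * ennreal (\<integral>\<omega>. A \<omega> \<partial>Q)"
    using A0 by (intro ennreal_mult) (auto intro: integral_nonneg_AE)
  finally have e1: "(\<integral>\<^sup>+\<omega>. ennreal (Max ((\<lambda>(u,v). \<bar>Sfun m k \<omega> u - Sfun m k \<omega> v\<bar>) ` L)) \<partial>Q)
      \<le> ennreal (2 / m) * ennreal (\<integral>\<omega>. A \<omega> \<partial>Q)" .
  have "ennreal (\<integral>\<omega>. A \<omega> \<partial>Q) = (\<integral>\<^sup>+\<omega>. ennreal (A \<omega>) \<partial>Q)"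
    by (rule nn_integral_eq_integral[symmetric]) (use Aint A0 in auto)
  also have "\<dots> \<le> (\<integral>\<^sup>+\<omega>. ennreal c * ennreal (Mx m \<omega>) \<partial>Q)"
  proof (intro nn_integral_mono)
    fix \<omega>
    have "ennreal (A \<omega>) \<le> ennreal (c * Mx m \<omega>)" using pt2 by (rule ennreal_leI)
    also have "\<dots> = ennreal c * ennreal (Mx m \<omega>)" using c0 Mx_nonneg[OF m] by (rule ennreal_mult)
    finally show "ennreal (A \<omega>) \<le> ennreal c * ennreal (Mx m \<omega>)" .
  qed
  also have "\<dots> = ennreal c * (\<integral>\<^sup>+\<omega>. ennreal (Mx m \<omega>) \<partial>Q)"
    by (rule nn_integral_cmult) (use Mxm in auto)
  finally have e2: "ennreal (\<integral>\<omega>. A \<omega> \<partial>Q) \<le> ennreal c * (\<integral>\<^sup>+\<omega>. ennreal (Mx m \<omega>) \<partial>Q)" .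
  have "(\<integral>\<^sup>+\<omega>. ennreal (Max ((\<lambda>(u,v). \<bar>Sfun m k \<omega> u - Sfun m k \<omega> v\<bar>) ` L)) \<partial>Q)
      \<le> ennreal (2 / m) * (ennreal c * (\<integral>\<^sup>+\<omega>. ennreal (Mx m \<omega>) \<partial>Q))"
    by (rule order_trans[OF e1 mult_left_mono[OF e2]]) simp
  also have "ennreal (2 / m) * (ennreal c * (\<integral>\<^sup>+\<omega>. ennreal (Mx m \<omega>) \<partial>Q))
      = ennreal (2 / m * c) * (\<integral>\<^sup>+\<omega>. ennreal (Mx m \<omega>) \<partial>Q)"
  proof -
    have "ennreal (2 / m * c) = ennreal (2 / m) * ennreal c" using c0 by (intro ennreal_mult) auto
    thus ?thesis by (simp add: mult.assoc)
  qed
  also have "2 / m * c = 2 * r * sqrt (2 * ln (2 * real (card L))) / sqrt m"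
  proof -
    have "sqrt (real m) * sqrt (real m) = m" using m by simp
    thus ?thesis using m unfolding c_def s_def by (simp add: field_simps)
  qed
  finally show ?thesis unfolding Q_def .
qed

lemma sum_geom_identity: "(\<Sum>j\<in>{1..K}. (real j + 7) / 2^j) = 9 - (real K + 9) / 2^K"
proof (induction K)
  case 0 thus ?case by simp
next
  case (Suc K)
  have "(\<Sum>j\<in>{1..Suc K}. (real j + 7) / 2^j) = (\<Sum>j\<in>{1..K}. (real j + 7) / 2^j) + (real (Suc K) + 7) / 2^Suc K"
    by simp
  also have "\<dots> = 9 - (real (Suc K) + 9) / 2^Suc K" unfolding Suc by (simp add: field_simps)
  finally show ?case .
qed

lemma sum_geom_bound: "(\<Sum>j\<in>{1..K}. (real j + 7) / 2^j) \<le> 9"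
  unfolding sum_geom_identity by simp

lemma sqrt_lin: "sqrt (x + 3) \<le> (x + 7) / 4" if "x \<ge> 0" for x :: real
proof -
  have e: "((x + 7) / 4)\<^sup>2 - (x + 3) = ((x - 1) / 4)\<^sup>2" by (simp add: power2_eq_square field_simps)
  have "0 \<le> ((x - 1) / 4)\<^sup>2" by simp
  hence "x + 3 \<le> ((x + 7) / 4)\<^sup>2" using e by linarith
  thus ?thesis using that by (subst real_sqrt_le_iff') auto
qed

lemma chain_bound:
  fixes P :: "'a::euclidean_space measure" and T :: "'a set" and k :: "'a \<Rightarrow> real"
  assumes P: "prob_space P" and sP: "sets P = sets borel"
    and krep: "\<And>t. k t = (\<integral>w. cos (w \<bullet> t) \<partial>P)"
    and m: "m > 0" and l: "l > 0" and Tl: "T \<subseteq> cball 0 l" and T0: "0 \<in> T"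
    and lip: "L-lipschitz_on T k"
  shows "(\<integral>\<^sup>+\<omega>. (SUP t\<in>T. ennreal \<bar>Sfun m k \<omega> t\<bar>) \<partial>PiM {..<m} (\<lambda>_. P))
     \<le> ennreal ((9 * sqrt 2 + 1) * sqrt (real DIM('a)) * l / sqrt m)
        * ((\<integral>\<^sup>+\<omega>. ennreal (Mx m \<omega>) \<partial>PiM {..<m} (\<lambda>_. P)) + ennreal L)"
proof -
  define Q where "Q = PiM {..<m} (\<lambda>_. P)"
  interpret Pp: prob_space P by (rule P)
  have PQ: "prob_space Q" unfolding Q_def by (auto intro!: prob_space_PiM P)
  interpret Qp: prob_space Q by (rule PQ)
  define d where "d = DIM('a)"
  define \<epsilon> where "\<epsilon> j = l / 2^j" for j :: nat
  have \<epsilon>0: "\<epsilon> j > 0" for j using l by (simp add: \<epsilon>_def)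
  have L0: "L \<ge> 0" using lip by (rule lipschitz_on_nonneg)
  have "\<forall>j. \<exists>N. finite N \<and> N \<subseteq> T \<and> N \<noteq> {} \<and> real (card N) \<le> (1 + 2 * l / \<epsilon> j) ^ DIM('a)
             \<and> (\<forall>t\<in>T. \<exists>u\<in>N. dist t u < \<epsilon> j)"
    using net_exists[OF Tl _ \<epsilon>0 less_imp_le[OF l]] T0 by blast
  then obtain NN where NN: "\<And>j. finite (NN j)" "\<And>j. NN j \<subseteq> T" "\<And>j. NN j \<noteq> {}"
     "\<And>j. real (card (NN j)) \<le> (1 + 2 * l / \<epsilon> j) ^ DIM('a)" "\<And>j t. t \<in> T \<Longrightarrow> \<exists>u\<in>NN j. dist t u < \<epsilon> j"
    by metis
  define Net where "Net j = (if j = 0 then {0} else NN j)" for j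
  define p where "p j t = (if j = 0 then 0 else SOME u. u \<in> NN j \<and> dist t u < \<epsilon> j)" for j t
  have p: "p j t \<in> Net j \<and> dist t (p j t) \<le> \<epsilon> j" if "t \<in> T" for j t
  proof (cases "j = 0")
    case True thus ?thesis using Tl that by (auto simp: p_def Net_def \<epsilon>_def dist_commute)
  next
    case False
    have "\<exists>u. u \<in> NN j \<and> dist t u < \<epsilon> j" using NN(5)[OF that] by blast
    hence "(SOME u. u \<in> NN j \<and> dist t u < \<epsilon> j) \<in> NN j \<and> dist t (SOME u. u \<in> NN j \<and> dist t u < \<epsilon> j) < \<epsilon> j"
      by (rule someI_ex)
    thus ?thesis using False by (auto simp: p_def Net_def)
  qed
  have NetT: "Net j \<subseteq> T" "finite (Net j)" "Net j \<noteq> {}" for j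
    using NN T0 by (auto simp: Net_def)
  have cardNet: "real (card (Net j)) \<le> (1 + 2^(j+1)) ^ d" if "j \<ge> 1" for j
  proof -
    have "2 * l / \<epsilon> j = 2^(j+1)" using l by (simp add: \<epsilon>_def)
    thus ?thesis using NN(4)[of j] that by (simp add: Net_def d_def)
  qed
  define S where "S \<omega> t = Sfun m k \<omega> t" for \<omega> t
  have k0: "k 0 = 1" by (simp add: krep Pp.prob_space)
  have S0: "S \<omega> 0 = 0" for \<omega> using m k0 by (simp add: S_def Sfun_def)
  define Lk where "Lk j = (\<lambda>u. (u, p (j - 1) u)) ` Net j" for j
  define H where "H j \<omega> = Max ((\<lambda>(u,v). \<bar>S \<omega> u - S \<omega> v\<bar>) ` Lk j)" for j \<omega>
  have Lk_fin: "finite (Lk j)" "Lk j \<noteq> {}" for j using NetT by (auto simp: Lk_def)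
  have chainP: "\<forall>u\<in>Net j. \<bar>S \<omega> u\<bar> \<le> (\<Sum>i\<in>{1..j}. H i \<omega>)" for j \<omega>
  proof (induction j)
    case 0 show ?case using S0 by (simp add: Net_def)
  next
    case (Suc j)
    show ?case
    proof
      fix u assume u: "u \<in> Net (Suc j)"
      hence uT: "u \<in> T" using NetT by auto
      have pu: "p j u \<in> Net j" using p[OF uT] by auto
      have "(u, p j u) \<in> Lk (Suc j)" using u by (auto simp: Lk_def)
      hence "\<bar>S \<omega> u - S \<omega> (p j u)\<bar> \<in> (\<lambda>(u,v). \<bar>S \<omega> u - S \<omega> v\<bar>) ` Lk (Suc j)" by force
      hence h1: "\<bar>S \<omega> u - S \<omega> (p j u)\<bar> \<le> H (Suc j) \<omega>" unfolding H_def using Lk_fin by (intro Max_ge) auto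
      have h2: "\<bar>S \<omega> (p j u)\<bar> \<le> (\<Sum>i\<in>{1..j}. H i \<omega>)" using Suc.IH pu by auto
      have "\<bar>S \<omega> u\<bar> \<le> \<bar>S \<omega> u - S \<omega> (p j u)\<bar> + \<bar>S \<omega> (p j u)\<bar>" by linarith
      also have "\<dots> \<le> H (Suc j) \<omega> + (\<Sum>i\<in>{1..j}. H i \<omega>)" using h1 h2 by linarith
      also have "\<dots> = (\<Sum>i\<in>{1..Suc j}. H i \<omega>)" by simp
      finally show "\<bar>S \<omega> u\<bar> \<le> (\<Sum>i\<in>{1..Suc j}. H i \<omega>)" .
    qed
  qed
  have Slip: "\<bar>S \<omega> t - S \<omega> s\<bar> \<le> (Mx m \<omega> + L) * norm (t - s)" if ts: "t \<in> T" "s \<in> T" for \<omega> t s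
  proof -
    have "\<bar>(\<Sum>i<m. cos (\<omega> i \<bullet> t)) - (\<Sum>i<m. cos (\<omega> i \<bullet> s))\<bar> = \<bar>\<Sum>i<m. cos (\<omega> i \<bullet> t) - cos (\<omega> i \<bullet> s)\<bar>"
      by (simp add: sum_subtractf)
    also have "\<dots> \<le> (\<Sum>i<m. \<bar>cos (\<omega> i \<bullet> t) - cos (\<omega> i \<bullet> s)\<bar>)" by (rule sum_abs)
    also have "\<dots> \<le> (\<Sum>i<m. Mx m \<omega> * norm (t - s))"
    proof (rule sum_mono)
      fix i assume "i \<in> {..<m}"
      hence "norm (\<omega> i) \<le> Mx m \<omega>" by (intro Mx_ge) auto
      thus "\<bar>cos (\<omega> i \<bullet> t) - cos (\<omega> i \<bullet> s)\<bar> \<le> Mx m \<omega> * norm (t - s)"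
        using inner_cos_lip[of "\<omega> i" t s] by (meson mult_right_mono norm_ge_zero order_trans)
    qed
    also have "\<dots> = m * (Mx m \<omega> * norm (t - s))" by simp
    finally have c1: "\<bar>(\<Sum>i<m. cos (\<omega> i \<bullet> t)) / m - (\<Sum>i<m. cos (\<omega> i \<bullet> s)) / m\<bar> \<le> Mx m \<omega> * norm (t - s)"
      using m by (simp add: diff_divide_distrib[symmetric] field_simps)
    have c2: "\<bar>k t - k s\<bar> \<le> L * norm (t - s)" using lipschitz_onD[OF lip ts] by (simp add: dist_norm)
    have "\<bar>S \<omega> t - S \<omega> s\<bar> \<le> \<bar>(\<Sum>i<m. cos (\<omega> i \<bullet> t)) / m - (\<Sum>i<m. cos (\<omega> i \<bullet> s)) / m\<bar> + \<bar>k t - k s\<bar>"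
      unfolding S_def Sfun_def by linarith
    thus ?thesis using c1 c2 by (simp add: algebra_simps)
  qed
  have Mx0: "Mx m \<omega> \<ge> 0" for \<omega> using Mx_nonneg[OF m] .
  have H0: "H j \<omega> \<ge> 0" for j \<omega>
  proof -
    obtain q where "q \<in> Lk j" using Lk_fin(2)[of j] by blast
    hence "(case q of (u,v) \<Rightarrow> \<bar>S \<omega> u - S \<omega> v\<bar>) \<le> H j \<omega>" unfolding H_def using Lk_fin by (intro Max_ge) auto
    thus ?thesis by (cases q) auto
  qed
  have ptw: "(SUP t\<in>T. ennreal \<bar>S \<omega> t\<bar>) \<le> ennreal ((\<Sum>j\<in>{1..m}. H j \<omega>) + (Mx m \<omega> + L) * \<epsilon> m)" for \<omega>
  proof (rule SUP_least)
    fix t assume t: "t \<in> T"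
    have pt: "p m t \<in> Net m" "dist t (p m t) \<le> \<epsilon> m" using p[OF t] by auto
    have "\<bar>S \<omega> t\<bar> \<le> \<bar>S \<omega> t - S \<omega> (p m t)\<bar> + \<bar>S \<omega> (p m t)\<bar>" by linarith
    also have "\<dots> \<le> (Mx m \<omega> + L) * \<epsilon> m + (\<Sum>j\<in>{1..m}. H j \<omega>)"
    proof (rule add_mono)
      have "\<bar>S \<omega> t - S \<omega> (p m t)\<bar> \<le> (Mx m \<omega> + L) * norm (t - p m t)"
        using Slip t pt NetT by blast
      also have "\<dots> \<le> (Mx m \<omega> + L) * \<epsilon> m"
        using pt Mx0[of \<omega>] L0 by (intro mult_left_mono) (auto simp: dist_norm)
      finally show "\<bar>S \<omega> t - S \<omega> (p m t)\<bar> \<le> (Mx m \<omega> + L) * \<epsilon> m" .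
      show "\<bar>S \<omega> (p m t)\<bar> \<le> (\<Sum>j\<in>{1..m}. H j \<omega>)" using chainP pt by blast
    qed
    finally show "ennreal \<bar>S \<omega> t\<bar> \<le> ennreal ((\<Sum>j\<in>{1..m}. H j \<omega>) + (Mx m \<omega> + L) * \<epsilon> m)"
      by (intro ennreal_leI) simp
  qed
  have compQ: "(\<lambda>v. v i) \<in> measurable Q P" if "i < m" for i
    unfolding Q_def using that by (intro measurable_component_singleton) auto
  have cm: "(\<lambda>w. cos (w \<bullet> t)) \<in> borel_measurable P" for t :: 'a
    by (subst measurable_cong_sets[OF sP refl]) measurable
  have Sm: "(\<lambda>\<omega>. S \<omega> t) \<in> borel_measurable Q" for t
    unfolding S_def Sfun_def
    by (intro borel_measurable_diff borel_measurable_divide borel_measurable_sum borel_measurable_const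
        measurable_compose[OF compQ cm]) auto
  have Hm: "H j \<in> borel_measurable Q" for j
    unfolding H_def
  proof (rule borel_measurable_Max[OF Lk_fin(1)])
    fix q assume "q \<in> Lk j"
    show "(\<lambda>\<omega>. case q of (u,v) \<Rightarrow> \<bar>S \<omega> u - S \<omega> v\<bar>) \<in> borel_measurable Q"
      by (cases q) (auto intro!: borel_measurable_abs borel_measurable_diff Sm)
  qed
  have nm: "(norm :: 'a \<Rightarrow> real) \<in> borel_measurable P"
    by (subst measurable_cong_sets[OF sP refl]) measurable
  have Mxm: "Mx m \<in> borel_measurable Q" unfolding Mx_def
    by (intro borel_measurable_Max measurable_compose[OF compQ nm]) auto
  define X where "X = (\<integral>\<^sup>+\<omega>. ennreal (Mx m \<omega>) \<partial>Q)"
  define c where "c j = sqrt 2 * sqrt d * l * ((real j + 7) / 2^j) / sqrt m" for j :: nat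
  have lvl: "(\<integral>\<^sup>+\<omega>. ennreal (H j \<omega>) \<partial>Q) \<le> ennreal (c j) * X" if j: "j \<ge> 1" for j
  proof -
    have r: "norm (u - v) \<le> \<epsilon> (j - 1)" if "(u,v) \<in> Lk j" for u v
    proof -
      from that obtain w where w: "w \<in> Net j" "u = w" "v = p (j - 1) w" by (auto simp: Lk_def)
      hence "w \<in> T" using NetT by auto
      thus ?thesis using p[of w "j - 1"] w by (simp add: dist_norm)
    qed
    have kl: "(\<integral>\<^sup>+\<omega>. ennreal (H j \<omega>) \<partial>Q)
        \<le> ennreal (2 * \<epsilon> (j - 1) * sqrt (2 * ln (2 * real (card (Lk j)))) / sqrt m) * X"
      unfolding H_def S_def Q_def X_def
      by (rule key_link[OF P sP krep m Lk_fin less_imp_le[OF \<epsilon>0] r])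
    have cLk: "1 \<le> card (Lk j)" using Lk_fin by (simp add: Suc_le_eq card_gt_0_iff)
    have d1: "d \<ge> 1" by (simp add: d_def DIM_positive Suc_le_eq)
    have "real (card (Lk j)) \<le> real (card (Net j))" unfolding Lk_def by (simp add: card_image_le NetT)
    also have "\<dots> \<le> (1 + 2^(j+1)) ^ d" by (rule cardNet[OF j])
    also have "\<dots> \<le> (2^(j+2)) ^ d"
    proof (rule power_mono)
      have "(1::real) \<le> 2^(j+1)" by (rule one_le_power) simp
      thus "1 + 2 ^ (j + 1) \<le> (2::real) ^ (j + 2)" by simp
    qed simp
    finally have "2 * real (card (Lk j)) \<le> 2 * (2^(j+2)) ^ d" by simp
    also have "\<dots> = 2 ^ (1 + (j+2) * d)" by (simp only: power_add power_mult power_one_right)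
    also have "\<dots> \<le> 2 ^ ((j+3) * d)" using d1 by (intro power_increasing) (auto simp: algebra_simps)
    finally have cb: "2 * real (card (Lk j)) \<le> 2 ^ ((j+3) * d)" .
    have "ln (2 * real (card (Lk j))) \<le> ln (2 ^ ((j+3) * d))"
      using cb cLk by (subst ln_le_cancel_iff) auto
    also have "\<dots> = real ((j+3) * d) * ln 2" by (simp add: ln_realpow)
    also have "\<dots> \<le> real ((j+3) * d) * 1" using ln_2_less_1 by (intro mult_left_mono) auto
    finally have lnb: "ln (2 * real (card (Lk j))) \<le> (real j + 3) * real d" by simp
    have "sqrt (2 * ln (2 * real (card (Lk j)))) \<le> sqrt (2 * ((real j + 3) * real d))"
      using lnb by simp
    also have "\<dots> = sqrt 2 * sqrt d * sqrt (real j + 3)"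
      by (simp only: real_sqrt_mult[symmetric] mult_ac)
    also have "\<dots> \<le> sqrt 2 * sqrt d * ((real j + 7) / 4)"
      by (intro mult_left_mono sqrt_lin) auto
    finally have sb: "sqrt (2 * ln (2 * real (card (Lk j)))) \<le> sqrt 2 * sqrt d * ((real j + 7) / 4)" .
    have e: "\<epsilon> (j - 1) = 2 * l / 2^j" using j l by (cases j) (auto simp: \<epsilon>_def)
    have "2 * \<epsilon> (j - 1) * sqrt (2 * ln (2 * real (card (Lk j)))) / sqrt m
        \<le> 2 * \<epsilon> (j - 1) * (sqrt 2 * sqrt d * ((real j + 7) / 4)) / sqrt m"
      using sb \<epsilon>0[of "j-1"] m by (intro divide_right_mono mult_left_mono) auto
    also have "\<dots> = c j" using m unfolding c_def e by (simp add: field_simps)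
    finally have "ennreal (2 * \<epsilon> (j - 1) * sqrt (2 * ln (2 * real (card (Lk j)))) / sqrt m) \<le> ennreal (c j)"
      by (rule ennreal_leI)
    hence "ennreal (2 * \<epsilon> (j - 1) * sqrt (2 * ln (2 * real (card (Lk j)))) / sqrt m) * X \<le> ennreal (c j) * X"
      by (rule mult_right_mono) simp
    thus ?thesis using kl by (rule order_trans[rotated])
  qed
  define C0 where "C0 = (9 * sqrt 2 + 1) * sqrt (real DIM('a)) * l / sqrt m"
  have cj0: "c j \<ge> 0" for j using l m by (simp add: c_def)
  have \<epsilon>m0: "\<epsilon> m \<ge> 0" using \<epsilon>0 less_imp_le by blast
  have A1: "(\<integral>\<^sup>+\<omega>. (SUP t\<in>T. ennreal \<bar>Sfun m k \<omega> t\<bar>) \<partial>Q)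
      \<le> (\<integral>\<^sup>+\<omega>. ennreal ((\<Sum>j\<in>{1..m}. H j \<omega>) + (Mx m \<omega> + L) * \<epsilon> m) \<partial>Q)"
    by (rule nn_integral_mono) (use ptw in \<open>simp add: S_def\<close>)
  have pw: "ennreal ((\<Sum>j\<in>{1..m}. H j \<omega>) + (Mx m \<omega> + L) * \<epsilon> m)
      = ((\<Sum>j\<in>{1..m}. ennreal (H j \<omega>)) + ennreal (\<epsilon> m) * ennreal (Mx m \<omega>)) + ennreal (L * \<epsilon> m)" for \<omega>
  proof -
    have s0: "0 \<le> (\<Sum>j\<in>{1..m}. H j \<omega>)" by (intro sum_nonneg) (use H0 in auto)
    have t0: "0 \<le> \<epsilon> m * Mx m \<omega>" using \<epsilon>m0 Mx0[of \<omega>] by simp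
    have u0: "0 \<le> L * \<epsilon> m" using \<epsilon>m0 L0 by simp
    have "ennreal ((\<Sum>j\<in>{1..m}. H j \<omega>) + (Mx m \<omega> + L) * \<epsilon> m)
        = ennreal (((\<Sum>j\<in>{1..m}. H j \<omega>) + \<epsilon> m * Mx m \<omega>) + L * \<epsilon> m)" by (simp add: algebra_simps)
    also have "\<dots> = ennreal ((\<Sum>j\<in>{1..m}. H j \<omega>) + \<epsilon> m * Mx m \<omega>) + ennreal (L * \<epsilon> m)"
      using s0 t0 u0 by (intro ennreal_plus) auto
    also have "ennreal ((\<Sum>j\<in>{1..m}. H j \<omega>) + \<epsilon> m * Mx m \<omega>) = ennreal (\<Sum>j\<in>{1..m}. H j \<omega>) + ennreal (\<epsilon> m * Mx m \<omega>)"
      using s0 t0 by (intro ennreal_plus) auto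
    also have "ennreal (\<Sum>j\<in>{1..m}. H j \<omega>) = (\<Sum>j\<in>{1..m}. ennreal (H j \<omega>))"
      using H0 by (simp add: sum_ennreal)
    also have "ennreal (\<epsilon> m * Mx m \<omega>) = ennreal (\<epsilon> m) * ennreal (Mx m \<omega>)"
      using \<epsilon>m0 Mx0 by (rule ennreal_mult)
    finally show ?thesis .
  qed
  have A2: "(\<integral>\<^sup>+\<omega>. ennreal ((\<Sum>j\<in>{1..m}. H j \<omega>) + (Mx m \<omega> + L) * \<epsilon> m) \<partial>Q)
      = ((\<Sum>j\<in>{1..m}. (\<integral>\<^sup>+\<omega>. ennreal (H j \<omega>) \<partial>Q)) + ennreal (\<epsilon> m) * X) + ennreal (L * \<epsilon> m)"
  proof -
    have "(\<integral>\<^sup>+\<omega>. ennreal ((\<Sum>j\<in>{1..m}. H j \<omega>) + (Mx m \<omega> + L) * \<epsilon> m) \<partial>Q)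
      = (\<integral>\<^sup>+\<omega>. ((\<Sum>j\<in>{1..m}. ennreal (H j \<omega>)) + ennreal (\<epsilon> m) * ennreal (Mx m \<omega>)) + ennreal (L * \<epsilon> m) \<partial>Q)"
      by (simp only: pw)
    also have "\<dots> = (\<integral>\<^sup>+\<omega>. (\<Sum>j\<in>{1..m}. ennreal (H j \<omega>)) + ennreal (\<epsilon> m) * ennreal (Mx m \<omega>) \<partial>Q)
        + (\<integral>\<^sup>+\<omega>. ennreal (L * \<epsilon> m) \<partial>Q)"
      by (rule nn_integral_add) (use Hm Mxm in auto)
    also have "(\<integral>\<^sup>+\<omega>. (\<Sum>j\<in>{1..m}. ennreal (H j \<omega>)) + ennreal (\<epsilon> m) * ennreal (Mx m \<omega>) \<partial>Q)
        = (\<integral>\<^sup>+\<omega>. (\<Sum>j\<in>{1..m}. ennreal (H j \<omega>)) \<partial>Q) + (\<integral>\<^sup>+\<omega>. ennreal (\<epsilon> m) * ennreal (Mx m \<omega>) \<partial>Q)"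
      by (rule nn_integral_add) (use Hm Mxm in auto)
    also have "(\<integral>\<^sup>+\<omega>. (\<Sum>j\<in>{1..m}. ennreal (H j \<omega>)) \<partial>Q) = (\<Sum>j\<in>{1..m}. (\<integral>\<^sup>+\<omega>. ennreal (H j \<omega>) \<partial>Q))"
      by (rule nn_integral_sum) (use Hm in auto)
    also have "(\<integral>\<^sup>+\<omega>. ennreal (\<epsilon> m) * ennreal (Mx m \<omega>) \<partial>Q) = ennreal (\<epsilon> m) * X"
      unfolding X_def by (rule nn_integral_cmult) (use Mxm in auto)
    also have "(\<integral>\<^sup>+\<omega>. ennreal (L * \<epsilon> m) \<partial>Q) = ennreal (L * \<epsilon> m)"
      by (simp add: Qp.emeasure_space_1)
    finally show ?thesis .
  qed
  have A3: "(\<Sum>j\<in>{1..m}. (\<integral>\<^sup>+\<omega>. ennreal (H j \<omega>) \<partial>Q)) \<le> ennreal (\<Sum>j\<in>{1..m}. c j) * X"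
  proof -
    have "(\<Sum>j\<in>{1..m}. (\<integral>\<^sup>+\<omega>. ennreal (H j \<omega>) \<partial>Q)) \<le> (\<Sum>j\<in>{1..m}. ennreal (c j) * X)"
      by (intro sum_mono lvl) auto
    also have "\<dots> = ennreal (\<Sum>j\<in>{1..m}. c j) * X"
    proof -
      have "(\<Sum>j\<in>{1..m}. ennreal (c j) * X) = (\<Sum>j\<in>{1..m}. ennreal (c j)) * X"
        by (simp only: sum_distrib_right)
      also have "(\<Sum>j\<in>{1..m}. ennreal (c j)) = ennreal (\<Sum>j\<in>{1..m}. c j)"
        using cj0 by (intro sum_ennreal) auto
      finally show ?thesis .
    qed
    finally show ?thesis .
  qed
  have A4: "(\<Sum>j\<in>{1..m}. c j) \<le> 9 * sqrt 2 * sqrt d * l / sqrt m"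
  proof -
    have "(\<Sum>j\<in>{1..m}. c j) = (sqrt 2 * sqrt d * l / sqrt m) * (\<Sum>j\<in>{1..m}. (real j + 7) / 2^j)"
      unfolding c_def sum_distrib_left by (intro sum.cong refl) (simp add: field_simps)
    also have "\<dots> \<le> (sqrt 2 * sqrt d * l / sqrt m) * 9"
      using l m by (intro mult_left_mono sum_geom_bound) auto
    also have "\<dots> = 9 * sqrt 2 * sqrt d * l / sqrt m" by (simp add: field_simps)
    finally show ?thesis .
  qed
  have A5: "\<epsilon> m \<le> sqrt d * l / sqrt m"
  proof -
    have "real m < 2 ^ m" by (metis of_nat_less_numeral_power_cancel_iff less_exp)
    moreover have g1: "1 \<le> (2::real)^m" by (rule one_le_power) simp
    moreover have "(2::real)^m * 1 \<le> 2^m * 2^m" by (rule mult_left_mono[OF g1]) simp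
    ultimately have "real m \<le> (2 ^ m)\<^sup>2" unfolding power2_eq_square by linarith
    hence sm: "sqrt m \<le> 2 ^ m" by (subst real_sqrt_le_iff') auto
    have d1: "1 \<le> sqrt (real d)" by (simp add: d_def DIM_positive Suc_le_eq)
    have "\<epsilon> m = l / 2^m" by (simp add: \<epsilon>_def)
    also have "\<dots> \<le> l / sqrt m" using sm l m by (intro divide_left_mono) auto
    also have "\<dots> \<le> sqrt d * l / sqrt m" using d1 l m by (simp add: divide_right_mono)
    finally show ?thesis .
  qed
  have C0eq: "C0 = 9 * sqrt 2 * sqrt d * l / sqrt m + sqrt d * l / sqrt m"
    using m by (simp add: C0_def d_def field_simps)
  have "(\<integral>\<^sup>+\<omega>. (SUP t\<in>T. ennreal \<bar>Sfun m k \<omega> t\<bar>) \<partial>Q)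
      \<le> (ennreal (\<Sum>j\<in>{1..m}. c j) * X + ennreal (\<epsilon> m) * X) + ennreal (L * \<epsilon> m)"
  proof -
    have "(\<Sum>j\<in>{1..m}. (\<integral>\<^sup>+\<omega>. ennreal (H j \<omega>) \<partial>Q)) + ennreal (\<epsilon> m) * X
        \<le> ennreal (\<Sum>j\<in>{1..m}. c j) * X + ennreal (\<epsilon> m) * X"
      using A3 by (rule add_right_mono)
    hence "((\<Sum>j\<in>{1..m}. (\<integral>\<^sup>+\<omega>. ennreal (H j \<omega>) \<partial>Q)) + ennreal (\<epsilon> m) * X) + ennreal (L * \<epsilon> m)
        \<le> (ennreal (\<Sum>j\<in>{1..m}. c j) * X + ennreal (\<epsilon> m) * X) + ennreal (L * \<epsilon> m)"
      by (rule add_right_mono)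
    with A1[unfolded A2] show ?thesis by (rule order_trans)
  qed
  also have "ennreal (\<Sum>j\<in>{1..m}. c j) * X + ennreal (\<epsilon> m) * X = ennreal ((\<Sum>j\<in>{1..m}. c j) + \<epsilon> m) * X"
    using cj0 \<epsilon>m0 by (simp add: distrib_right sum_nonneg)
  also have "\<dots> \<le> ennreal C0 * X"
    using A4 A5 unfolding C0eq by (intro mult_right_mono ennreal_leI) auto
  also have "ennreal (L * \<epsilon> m) \<le> ennreal C0 * ennreal L"
  proof -
    have "0 \<le> 9 * sqrt 2 * sqrt d * l / sqrt m" using l m by simp
    hence "\<epsilon> m \<le> C0" using A5 C0eq by linarith
    hence "\<epsilon> m * L \<le> C0 * L" by (rule mult_right_mono[OF _ L0])
    hence "L * \<epsilon> m \<le> C0 * L" by (simp add: mult.commute)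
    hence "ennreal (L * \<epsilon> m) \<le> ennreal (C0 * L)" by (rule ennreal_leI)
    also have "\<dots> = ennreal C0 * ennreal L"
      using \<open>\<epsilon> m \<le> C0\<close> \<epsilon>m0 L0 by (intro ennreal_mult) auto
    finally show ?thesis .
  qed
  finally show ?thesis unfolding C0_def[symmetric] X_def Q_def by (simp add: distrib_left)
qed

lemma erfc_nonneg: "erfc x \<ge> 0"
proof -
  have "integral {x..} (\<lambda>t. exp (- (t\<^sup>2))) \<ge> 0"
  proof (cases "(\<lambda>t. exp (- (t\<^sup>2))) integrable_on {x..}")
    case True thus ?thesis by (rule integral_nonneg) simp
  next
    case False thus ?thesis by (simp add: not_integrable_integral)
  qed
  thus ?thesis unfolding erfc_def by simp
qed

lemma gamma_bound: "18 + sqrt 2 \<le> 24 * rff_gamma"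
proof -
  have g: "rff_gamma \<ge> sqrt (ln 2)" unfolding rff_gamma_def using erfc_nonneg by simp
  have "(13/16)\<^sup>2 \<le> (2/3::real)" by (simp add: power2_eq_square)
  also have "\<dots> \<le> ln 2" by (rule ln2_ge_two_thirds)
  finally have "13/16 \<le> sqrt (ln 2)" by (subst real_le_rsqrt) auto
  have "sqrt 2 \<le> 142/100"
    by (subst real_sqrt_le_iff') (auto simp: power2_eq_square)
  thus ?thesis using g \<open>13/16 \<le> sqrt (ln 2)\<close> by linarith
qed

lemma sum_even_odd: "(\<Sum>j<2*m. f j) = (\<Sum>i<m. f (2*i) + f (2*i+1))" for f :: "nat \<Rightarrow> real"
  by (induction m) (simp_all add: algebra_simps)

lemma rff_eq:
  assumes "m > 0" "D = 2 * m"
  shows "rff_error D k \<omega> x y = Sfun m k \<omega> (x - y)"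
proof -
  have "rff_error D k \<omega> x y = (\<Sum>i<m. (2 / real D) * cos (\<omega> i \<bullet> (x - y))) - k (x - y)"
    unfolding rff_error_def assms(2) sum_even_odd
  proof (intro arg_cong2[where f="(-)"] sum.cong refl)
    fix i
    define c where "c = sqrt (2 / real (2 * m))"
    have sq: "c * c = 2 / real (2 * m)" unfolding c_def by simp
    have e: "rff_feature (2 * m) \<omega> z (2 * i) = c * sin (\<omega> i \<bullet> z)"
            "rff_feature (2 * m) \<omega> z (2 * i + 1) = c * cos (\<omega> i \<bullet> z)" for z
      unfolding rff_feature_def c_def by simp_all
    have "rff_feature (2 * m) \<omega> x (2 * i) * rff_feature (2 * m) \<omega> y (2 * i) +
          rff_feature (2 * m) \<omega> x (2 * i + 1) * rff_feature (2 * m) \<omega> y (2 * i + 1)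
        = (c * c) * (cos (\<omega> i \<bullet> x) * cos (\<omega> i \<bullet> y) + sin (\<omega> i \<bullet> x) * sin (\<omega> i \<bullet> y))"
      unfolding e by (simp only: algebra_simps)
    also have "\<dots> = 2 / real (2 * m) * cos (\<omega> i \<bullet> (x - y))"
      unfolding sq cos_diff[symmetric] inner_diff_right ..
    finally show "rff_feature (2 * m) \<omega> x (2 * i) * rff_feature (2 * m) \<omega> y (2 * i) +
          rff_feature (2 * m) \<omega> x (2 * i + 1) * rff_feature (2 * m) \<omega> y (2 * i + 1) =
          2 / real (2 * m) * cos (\<omega> i \<bullet> (x - y))" .
  qed
  also have "\<dots> = Sfun m k \<omega> (x - y)"
  proof -
    have "2 / real D * cos (\<omega> i \<bullet> (x - y)) = cos (\<omega> i \<bullet> (x - y)) / m" for i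
      using assms by simp
    hence "(\<Sum>i<m. 2 / real D * cos (\<omega> i \<bullet> (x - y))) = (\<Sum>i<m. cos (\<omega> i \<bullet> (x - y))) / m"
      by (simp add: sum_divide_distrib)
    thus ?thesis by (simp add: Sfun_def)
  qed
  finally show ?thesis .
qed

theorem proposition3:
  fixes X :: "'a::euclidean_space set"
    and k :: "'a \<Rightarrow> real"
    and P :: "'a measure"
    and L :: real
    and D :: nat
  assumes "compact X"
    and "continuous_on UNIV k"
    and "pos_def_fun k"
    and "k 0 = 1"
    and "hessian_exists_at k 0"
    and "prob_space P"
    and "sets P = sets borel"
    and "\<forall>\<Delta>. complex_of_real (k \<Delta>) = (\<integral>\<omega>. cis (\<omega> \<bullet> \<Delta>) \<partial>P)"
    and "L-lipschitz_on {x - y | x y. x \<in> X \<and> y \<in> X} k"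
    and "even D" and "D > 0"
  shows "(\<integral>\<^sup>+ \<omega>. (SUP xy\<in>X \<times> X. ennreal \<bar>rff_error D k \<omega> (fst xy) (snd xy)\<bar>)
            \<partial>(PiM {..<D div 2} (\<lambda>_. P)))
         \<le> ennreal (24 * rff_gamma * sqrt (real DIM('a)) * diameter X / sqrt (real D))
           * ((\<integral>\<^sup>+ \<omega>. ennreal (Max ((\<lambda>i. norm (\<omega> i)) ` {..<D div 2}))
                   \<partial>(PiM {..<D div 2} (\<lambda>_. P))) + ennreal L)"
proof -
  define m where "m = D div 2"
  have m: "m > 0" using assms(10,11) by (auto simp: m_def elim: evenE)
  have D2: "D = 2 * m" using assms(10) by (simp add: m_def)
  have P: "prob_space P" by (rule assms(6))
  interpret Pp: prob_space P by (rule P)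
  have krep: "k t = (\<integral>w. cos (w \<bullet> t) \<partial>P)" for t
  proof -
    have cm: "(\<lambda>w. cis (w \<bullet> t)) \<in> borel_measurable P"
    proof -
      have "continuous_on UNIV (\<lambda>w::'a. cis (w \<bullet> t))" by (intro continuous_intros)
      hence "(\<lambda>w::'a. cis (w \<bullet> t)) \<in> borel_measurable borel" by (rule borel_measurable_continuous_onI)
      thus ?thesis by (subst measurable_cong_sets[OF assms(7) refl])
    qed
    have ci: "integrable P (\<lambda>w. cis (w \<bullet> t))"
      by (rule Pp.integrable_const_bound[where B=1]) (use cm in auto)
    have "(\<integral>w. cos (w \<bullet> t) \<partial>P) = (\<integral>w. Re (cis (w \<bullet> t)) \<partial>P)" by simp
    also have "\<dots> = Re (\<integral>w. cis (w \<bullet> t) \<partial>P)" by (rule integral_Re[OF ci])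
    also have "\<dots> = k t" using assms(8) by (metis Re_complex_of_real)
    finally show ?thesis by simp
  qed
  define Q where "Q = PiM {..<m} (\<lambda>_. P)"
  define Y where "Y = (\<integral>\<^sup>+ \<omega>. ennreal (Max ((\<lambda>i. norm (\<omega> i)) ` {..<D div 2})) \<partial>(PiM {..<D div 2} (\<lambda>_. P))) + ennreal L"
  define C1 where "C1 = 24 * rff_gamma * sqrt (real DIM('a)) * diameter X / sqrt (real D)"
  have rff: "rff_error D k \<omega> x y = Sfun m k \<omega> (x - y)" for \<omega> x y
    by (rule rff_eq[OF m D2])
  show ?thesis
  proof (cases "X = {}")
    case True thus ?thesis by (simp add: bot_ennreal)
  next
    case Xne: False
    have bX: "bounded X" using assms(1) by (rule compact_imp_bounded)
    define l where "l = diameter X"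
    have dxy: "norm (x - y) \<le> l" if "x \<in> X" "y \<in> X" for x y
      using diameter_bounded_bound[OF bX that] by (simp add: l_def dist_norm)
    have l0: "l \<ge> 0" using Xne dxy by (metis all_not_in_conv norm_ge_zero order_trans)
    show ?thesis
    proof (cases "l = 0")
      case True
      have "(SUP xy\<in>X \<times> X. ennreal \<bar>rff_error D k \<omega> (fst xy) (snd xy)\<bar>) = 0" for \<omega>
      proof (rule antisym)
        show "(SUP xy\<in>X \<times> X. ennreal \<bar>rff_error D k \<omega> (fst xy) (snd xy)\<bar>) \<le> 0"
        proof (rule SUP_least)
          fix xy assume xy: "xy \<in> X \<times> X"
          hence "fst xy = snd xy" using dxy[of "fst xy" "snd xy"] True by auto
          hence "rff_error D k \<omega> (fst xy) (snd xy) = 0"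
            using m assms(4) by (simp add: rff Sfun_def)
          thus "ennreal \<bar>rff_error D k \<omega> (fst xy) (snd xy)\<bar> \<le> 0" by simp
        qed
      qed simp
      thus ?thesis by simp
    next
      case False
      hence lpos: "l > 0" using l0 by simp
      define T where "T = {x - y | x y. x \<in> X \<and> y \<in> X}"
      have Tl: "T \<subseteq> cball 0 l" using dxy by (auto simp: T_def)
      have T0: "0 \<in> T" using Xne by (auto simp: T_def)
      have lip: "L-lipschitz_on T k" using assms(9) by (simp add: T_def)
      have "(\<integral>\<^sup>+ \<omega>. (SUP xy\<in>X \<times> X. ennreal \<bar>rff_error D k \<omega> (fst xy) (snd xy)\<bar>) \<partial>Q)
          \<le> (\<integral>\<^sup>+ \<omega>. (SUP t\<in>T. ennreal \<bar>Sfun m k \<omega> t\<bar>) \<partial>Q)"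
      proof (intro nn_integral_mono SUP_least)
        fix \<omega> xy assume xy: "xy \<in> X \<times> X"
        hence "fst xy - snd xy \<in> T" unfolding T_def by (cases xy) auto
        thus "ennreal \<bar>rff_error D k \<omega> (fst xy) (snd xy)\<bar> \<le> (SUP t\<in>T. ennreal \<bar>Sfun m k \<omega> t\<bar>)"
          unfolding rff by (rule SUP_upper)
      qed
      also have "\<dots> \<le> ennreal ((9 * sqrt 2 + 1) * sqrt (real DIM('a)) * l / sqrt m) * Y"
        unfolding Q_def Y_def m_def[symmetric] Mx_def[symmetric]
        by (rule chain_bound[OF P assms(7) krep m lpos Tl T0 lip])
      also have "\<dots> \<le> ennreal C1 * Y"
      proof (intro mult_right_mono ennreal_leI)
        have sD: "sqrt (real D) = sqrt 2 * sqrt m" using D2 by (simp add: real_sqrt_mult)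
        have K0: "0 \<le> sqrt (real DIM('a)) * l / sqrt m" using l0 by simp
        have "(9 * sqrt 2 + 1) * sqrt 2 = 18 + sqrt 2" by (simp add: algebra_simps)
        hence "(9 * sqrt 2 + 1) * sqrt 2 \<le> 24 * rff_gamma" using gamma_bound by simp
        hence c: "9 * sqrt 2 + 1 \<le> 24 * rff_gamma / sqrt 2" by (simp add: le_divide_eq)
        have "(9 * sqrt 2 + 1) * sqrt (real DIM('a)) * l / sqrt m
            = (9 * sqrt 2 + 1) * (sqrt (real DIM('a)) * l / sqrt m)" by simp
        also have "\<dots> \<le> (24 * rff_gamma / sqrt 2) * (sqrt (real DIM('a)) * l / sqrt m)"
          by (rule mult_right_mono[OF c K0])
        also have "\<dots> = C1" unfolding C1_def sD l_def by simp
        finally show "(9 * sqrt 2 + 1) * sqrt (real DIM('a)) * l / sqrt m \<le> C1" .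
      qed simp
      finally show ?thesis unfolding Q_def Y_def C1_def m_def .
    qed
  qed
qed

end
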